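(* Let $R$ be a commutative ring, $M$ an $R$-module and $C$ an $R$-linear relation on $M$. If $IM\subseteq(C^{-1})'+C'$ for some ideal $I$ of $R$, then $C^\sharp\cap IM\subseteq C^\flat$; in particular $C^\sharp/C^\flat$ is an $R/I$-module. Furthermore, if $I=\mathrm{rad}(R)$ is the Jacobson radical and $R$ is perfect, then there is an $R[T,T^{-1}]$-module $P$ which is projective over $R$ and such that $P/IP\cong C^\sharp/C^\flat$ as $(R/I)[T,T^{-1}]$-modules.
   Context: An $R$-linear relation on $M$ is a submodule $C\subseteq M\oplus M$; $Cm=\{m':(m,m')\in C\}$, $C^{-1}=\{(y,x):(x,y)\in C\}$. $C''$: the set of $m\in M$ for which there exists $(m_n)_{n\in\mathbb{N}}$ with $m_0=m$ and $m_{n+1}\in Cm_n$ for all $n$; $C'$: those for which such a sequence exists with $m_n=0$ for $n\gg0$; $C^\sharp=C''\cap(C^{-1})''$; $C^\flat=C''\cap(C^{-1})'+(C^{-1})''\cap C'$. $C^\sharp/C^\flat$ is an $R[T,T^{-1}]$-module, $T$ acting by the automorphism $m+C^\flat\mapsto m'+C^\flat$ where $m'\in C^\sharp\cap(C^\flat+Cm)$. A ring is perfect if every module has a projective cover. *)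

theory Defs
  imports "HOL-Algebra.Algebra"
begin

definition mod_hom :: "('r, 'x) ring_scheme \<Rightarrow> ('r, 'a) module \<Rightarrow> ('r, 'b) module \<Rightarrow> ('a \<Rightarrow> 'b) \<Rightarrow> bool" where
  "mod_hom R A B f \<longleftrightarrow>
     f \<in> carrier A \<rightarrow> carrier B \<and>
     (\<forall>x\<in>carrier A. \<forall>y\<in>carrier A. f (x \<oplus>\<^bsub>A\<^esub> y) = f x \<oplus>\<^bsub>B\<^esub> f y) \<and>
     (\<forall>a\<in>carrier R. \<forall>x\<in>carrier A. f (a \<odot>\<^bsub>A\<^esub> x) = a \<odot>\<^bsub>B\<^esub> f x)"

definition mod_iso :: "('r, 'x) ring_scheme \<Rightarrow> ('r, 'a) module \<Rightarrow> ('r, 'b) module \<Rightarrow> ('a \<Rightarrow> 'b) \<Rightarrow> bool" where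
  "mod_iso R A B f \<longleftrightarrow> mod_hom R A B f \<and> bij_betw f (carrier A) (carrier B)"

definition quot :: "('r, 'm) module \<Rightarrow> 'm set \<Rightarrow> 'm set \<Rightarrow> ('r, 'm set) module" where
  "quot M S N =
    \<lparr>carrier = {N +>\<^bsub>M\<^esub> x | x. x \<in> S},
     monoid.mult = (\<lambda>A B. undefined), one = undefined,
     ring.zero = N,
     ring.add = (\<lambda>A B. A <+>\<^bsub>M\<^esub> B),
     module.smult = (\<lambda>a A. N <+>\<^bsub>M\<^esub> ((\<lambda>x. a \<odot>\<^bsub>M\<^esub> x) ` A))\<rparr>"

inductive_set ideal_mod :: "'r set \<Rightarrow> ('r, 'm) module \<Rightarrow> 'm set" for I M where
  zero: "\<zero>\<^bsub>M\<^esub> \<in> ideal_mod I M"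
| step: "x \<in> ideal_mod I M \<Longrightarrow> a \<in> I \<Longrightarrow> m \<in> carrier M \<Longrightarrow>
         x \<oplus>\<^bsub>M\<^esub> (a \<odot>\<^bsub>M\<^esub> m) \<in> ideal_mod I M"

definition lin_rel :: "('r, 'x) ring_scheme \<Rightarrow> ('r, 'm) module \<Rightarrow> ('m \<times> 'm) set \<Rightarrow> bool" where
  "lin_rel R M C \<longleftrightarrow>
     C \<subseteq> carrier M \<times> carrier M \<and>
     (\<zero>\<^bsub>M\<^esub>, \<zero>\<^bsub>M\<^esub>) \<in> C \<and>
     (\<forall>x y x' y'. (x, y) \<in> C \<longrightarrow> (x', y') \<in> C \<longrightarrow> (x \<oplus>\<^bsub>M\<^esub> x', y \<oplus>\<^bsub>M\<^esub> y') \<in> C) \<and>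
     (\<forall>a\<in>carrier R. \<forall>x y. (x, y) \<in> C \<longrightarrow> (a \<odot>\<^bsub>M\<^esub> x, a \<odot>\<^bsub>M\<^esub> y) \<in> C)"

text \<open>C'' : elements admitting an infinite C-chain m_0 = m, m_(n+1) in C m_n.\<close>
definition rel_inf :: "('m \<times> 'm) set \<Rightarrow> 'm set" where
  "rel_inf C = {m. \<exists>f :: nat \<Rightarrow> 'm. f 0 = m \<and> (\<forall>n. (f n, f (Suc n)) \<in> C)}"

text \<open>C' : such chains that are eventually zero.\<close>
definition rel_fin :: "('r, 'm) module \<Rightarrow> ('m \<times> 'm) set \<Rightarrow> 'm set" where
  "rel_fin M C = {m. \<exists>f :: nat \<Rightarrow> 'm. f 0 = m \<and> (\<forall>n. (f n, f (Suc n)) \<in> C) \<and>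
                       (\<exists>N. \<forall>n\<ge>N. f n = \<zero>\<^bsub>M\<^esub>)}"

definition rel_sharp :: "('m \<times> 'm) set \<Rightarrow> 'm set" where
  "rel_sharp C = rel_inf C \<inter> rel_inf (C\<inverse>)"

definition rel_flat :: "('r, 'm) module \<Rightarrow> ('m \<times> 'm) set \<Rightarrow> 'm set" where
  "rel_flat M C = (rel_inf C \<inter> rel_fin M (C\<inverse>)) <+>\<^bsub>M\<^esub> (rel_inf (C\<inverse>) \<inter> rel_fin M C)"

definition sharp_T :: "('r, 'm) module \<Rightarrow> ('m \<times> 'm) set \<Rightarrow> 'm set \<Rightarrow> 'm set" where
  "sharp_T M C U = (THE V. \<exists>m\<in>U. \<exists>m'. m' \<in> rel_sharp C \<inter> (rel_flat M C <+>\<^bsub>M\<^esub> (C `` {m})) \<and>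
                             V = rel_flat M C +>\<^bsub>M\<^esub> m')"

definition quot_map :: "('r, 'p) module \<Rightarrow> 'p set \<Rightarrow> ('p \<Rightarrow> 'p) \<Rightarrow> 'p set \<Rightarrow> 'p set" where
  "quot_map P N t U = N <+>\<^bsub>P\<^esub> (t ` U)"

definition free_carrier :: "('r, 'x) ring_scheme \<Rightarrow> ('r, 'p) module \<Rightarrow> ('p \<Rightarrow> 'r) set" where
  "free_carrier R P = {f. (\<forall>q. f q \<in> carrier R) \<and> (\<forall>q. q \<notin> carrier P \<longrightarrow> f q = \<zero>\<^bsub>R\<^esub>) \<and>
                          finite {q. f q \<noteq> \<zero>\<^bsub>R\<^esub>}}"

definition free_eps :: "('r, 'x) ring_scheme \<Rightarrow> ('r, 'p) module \<Rightarrow> ('p \<Rightarrow> 'r) \<Rightarrow> 'p" where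
  "free_eps R P f = (\<Oplus>\<^bsub>P\<^esub>q\<in>{q \<in> carrier P. f q \<noteq> \<zero>\<^bsub>R\<^esub>}. f q \<odot>\<^bsub>P\<^esub> q)"

text \<open>P is projective: P is a direct summand of a free module, i.e. the canonical
  surjection from the free module on P onto P has an R-linear section.\<close>
definition projective :: "('r, 'x) ring_scheme \<Rightarrow> ('r, 'p) module \<Rightarrow> bool" where
  "projective R P \<longleftrightarrow> module R P \<and>
     (\<exists>s. (\<forall>p\<in>carrier P. s p \<in> free_carrier R P \<and> free_eps R P (s p) = p) \<and>
          (\<forall>p\<in>carrier P. \<forall>q\<in>carrier P. s (p \<oplus>\<^bsub>P\<^esub> q) = (\<lambda>z. s p z \<oplus>\<^bsub>R\<^esub> s q z)) \<and>
          (\<forall>a\<in>carrier R. \<forall>p\<in>carrier P. s (a \<odot>\<^bsub>P\<^esub> p) = (\<lambda>z. a \<otimes>\<^bsub>R\<^esub> s p z)))"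

definition proj_cover :: "('r, 'x) ring_scheme \<Rightarrow> ('r, 'n) module \<Rightarrow> ('r, 'p) module \<Rightarrow> ('p \<Rightarrow> 'n) \<Rightarrow> bool" where
  "proj_cover R N P \<pi> \<longleftrightarrow>
     projective R P \<and> mod_hom R P N \<pi> \<and> \<pi> ` carrier P = carrier N \<and>
     (\<forall>L. submodule L R P \<longrightarrow>
          ({x \<in> carrier P. \<pi> x = \<zero>\<^bsub>N\<^esub>} <+>\<^bsub>P\<^esub> L) = carrier P \<longrightarrow> L = carrier P)"

text \<open>Since HOL cannot quantify
  over types inside a formula, the modules are those with carriers in the type 'n
  and the covers are sought with carriers in the type 'p.\<close>
definition perfect_wrt :: "'n itself \<Rightarrow> 'p itself \<Rightarrow> ('r, 'x) ring_scheme \<Rightarrow> bool" where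
  "perfect_wrt _ _ R \<longleftrightarrow>
     (\<forall>N :: ('r, 'n) module. module R N \<longrightarrow>
        (\<exists>P :: ('r, 'p) module. \<exists>\<pi>. proj_cover R N P \<pi>))"

definition jacobson :: "('r, 'x) ring_scheme \<Rightarrow> 'r set" where
  "jacobson R = carrier R \<inter> \<Inter> {J. maximalideal J R}"

end

theory Submission
  imports Defs
begin



lemma prepend_inf: "(y, x) \<in> E \<Longrightarrow> x \<in> rel_inf E \<Longrightarrow> y \<in> rel_inf E"
proof -
  assume yx: "(y, x) \<in> E" and "x \<in> rel_inf E"
  then obtain f where f: "f 0 = x" "\<forall>n. (f n, f (Suc n)) \<in> E" unfolding rel_inf_def by auto
  define g where "g = case_nat y f"
  have "\<forall>n. (g n, g (Suc n)) \<in> E" using f yx by (auto simp: g_def split: nat.split)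
  then show ?thesis unfolding rel_inf_def by (auto simp: g_def intro!: exI[of _ g])
qed

lemma prepend_fin: "(y, x) \<in> E \<Longrightarrow> x \<in> rel_fin M E \<Longrightarrow> y \<in> rel_fin M E"
proof -
  assume yx: "(y, x) \<in> E" and "x \<in> rel_fin M E"
  then obtain f N where f: "f 0 = x" "\<forall>n. (f n, f (Suc n)) \<in> E" "\<forall>n\<ge>N. f n = \<zero>\<^bsub>M\<^esub>"
    unfolding rel_fin_def by auto
  define g where "g = case_nat y f"
  have "\<forall>n. (g n, g (Suc n)) \<in> E" using f yx by (auto simp: g_def split: nat.split)
  moreover have "\<forall>n\<ge>Suc N. g n = \<zero>\<^bsub>M\<^esub>" using f(3) by (auto simp: g_def split: nat.split)
  ultimately show ?thesis unfolding rel_fin_def by (auto simp: g_def intro!: exI[of _ g] exI[of _ "Suc N"])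
qed

lemma step_inf: "x \<in> rel_inf E \<Longrightarrow> \<exists>y. (x, y) \<in> E \<and> y \<in> rel_inf E"
proof -
  assume "x \<in> rel_inf E"
  then obtain f where f: "f 0 = x" "\<forall>n. (f n, f (Suc n)) \<in> E" unfolding rel_inf_def by auto
  have "f 1 \<in> rel_inf E" unfolding rel_inf_def using f by (auto intro!: exI[of _ "\<lambda>n. f (Suc n)"])
  then show ?thesis using f by (metis One_nat_def)
qed

lemma step_fin: "x \<in> rel_fin M E \<Longrightarrow> \<exists>y. (x, y) \<in> E \<and> y \<in> rel_fin M E"
proof -
  assume "x \<in> rel_fin M E"
  then obtain f N where f: "f 0 = x" "\<forall>n. (f n, f (Suc n)) \<in> E" "\<forall>n\<ge>N. f n = \<zero>\<^bsub>M\<^esub>"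
    unfolding rel_fin_def by auto
  have "f 1 \<in> rel_fin M E" unfolding rel_fin_def using f
    by (auto intro!: exI[of _ "\<lambda>n. f (Suc n)"] exI[of _ N])
  then show ?thesis using f by (metis One_nat_def)
qed

lemma fin_sub_inf: "rel_fin M E \<subseteq> rel_inf E"
  unfolding rel_fin_def rel_inf_def by auto

lemma set_add_iff: "x \<in> A <+>\<^bsub>G\<^esub> B \<longleftrightarrow> (\<exists>a\<in>A. \<exists>b\<in>B. x = a \<oplus>\<^bsub>G\<^esub> b)"
  unfolding set_add_def' by auto

lemma rcos_iff: "x \<in> H +>\<^bsub>G\<^esub> a \<longleftrightarrow> (\<exists>h\<in>H. x = h \<oplus>\<^bsub>G\<^esub> a)"
  unfolding a_r_coset_def' by auto

context module
begin

lemma subE: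
  assumes "submodule H R M"
  shows "H \<subseteq> carrier M" "\<zero>\<^bsub>M\<^esub> \<in> H" "\<And>a. a \<in> H \<Longrightarrow> \<ominus>\<^bsub>M\<^esub> a \<in> H"
    "\<And>a b. \<lbrakk>a \<in> carrier R; b \<in> H\<rbrakk> \<Longrightarrow> a \<odot>\<^bsub>M\<^esub> b \<in> H"
    "\<And>a b. \<lbrakk>a \<in> H ; b \<in> H\<rbrakk> \<Longrightarrow> a \<oplus>\<^bsub>M\<^esub> b \<in> H"
    "\<And>a b. \<lbrakk>a \<in> H ; b \<in> H\<rbrakk> \<Longrightarrow> a \<ominus>\<^bsub>M\<^esub> b \<in> H"
proof -
  show "H \<subseteq> carrier M" "\<And>a. a \<in> H \<Longrightarrow> \<ominus>\<^bsub>M\<^esub> a \<in> H"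
    "\<And>a b. \<lbrakk>a \<in> carrier R; b \<in> H\<rbrakk> \<Longrightarrow> a \<odot>\<^bsub>M\<^esub> b \<in> H"
    "\<And>a b. \<lbrakk>a \<in> H ; b \<in> H\<rbrakk> \<Longrightarrow> a \<oplus>\<^bsub>M\<^esub> b \<in> H"
    using submoduleE[OF assms] by auto
  then show "\<And>a b. \<lbrakk>a \<in> H ; b \<in> H\<rbrakk> \<Longrightarrow> a \<ominus>\<^bsub>M\<^esub> b \<in> H"
    unfolding a_minus_def by auto
  show "\<zero>\<^bsub>M\<^esub> \<in> H" using submodule.axioms(1)[OF assms] subgroup.one_closed by fastforce
qed

lemma sub_inter: "submodule A R M \<Longrightarrow> submodule B R M \<Longrightarrow> submodule (A \<inter> B) R M"
proof -
  assume A: "submodule A R M" and B: "submodule B R M"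
  note a = subE[OF A] and b = subE[OF B]
  show ?thesis
  proof (rule submoduleI)
    show "A \<inter> B \<subseteq> carrier M" using a(1) by blast
    show "\<zero>\<^bsub>M\<^esub> \<in> A \<inter> B" using a(2) b(2) by blast
    show "\<ominus>\<^bsub>M\<^esub> x \<in> A \<inter> B" if "x \<in> A \<inter> B" for x using a(3) b(3) that by blast
    show "x \<oplus>\<^bsub>M\<^esub> y \<in> A \<inter> B" if "x \<in> A \<inter> B" "y \<in> A \<inter> B" for x y
      using a(5) b(5) that by blast
    show "c \<odot>\<^bsub>M\<^esub> x \<in> A \<inter> B" if "c \<in> carrier R" "x \<in> A \<inter> B" for c x
      using a(4) b(4) that by blast
  qed
qed

lemma sub_sum:
  assumes A: "submodule A R M" and B: "submodule B R M"
  shows "submodule (A <+>\<^bsub>M\<^esub> B) R M"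
proof (rule submoduleI)
  note a = subE[OF A] and b = subE[OF B]
  show "A <+>\<^bsub>M\<^esub> B \<subseteq> carrier M" using a(1) b(1) by (auto simp: set_add_iff subset_iff)
  show "\<zero>\<^bsub>M\<^esub> \<in> A <+>\<^bsub>M\<^esub> B" using a(2) b(2) by (force simp: set_add_iff)
  show "\<ominus>\<^bsub>M\<^esub> x \<in> A <+>\<^bsub>M\<^esub> B" if hx: "x \<in> A <+>\<^bsub>M\<^esub> B" for x
  proof -
    obtain u v where "u \<in> A" "v \<in> B" "x = u \<oplus>\<^bsub>M\<^esub> v" using hx by (auto simp: set_add_iff)
    moreover have "\<ominus>\<^bsub>M\<^esub> (u \<oplus>\<^bsub>M\<^esub> v) = \<ominus>\<^bsub>M\<^esub> u \<oplus>\<^bsub>M\<^esub> \<ominus>\<^bsub>M\<^esub> v"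
      using calculation a(1) b(1) by (auto intro: minus_add simp: subset_iff)
    ultimately show ?thesis unfolding set_add_iff using a(3) b(3) by blast
  qed
  show "x \<oplus>\<^bsub>M\<^esub> y \<in> A <+>\<^bsub>M\<^esub> B" if hx: "x \<in> A <+>\<^bsub>M\<^esub> B" and hy: "y \<in> A <+>\<^bsub>M\<^esub> B" for x y
  proof -
    obtain u v where uv: "u \<in> A" "v \<in> B" "x = u \<oplus>\<^bsub>M\<^esub> v" using hx by (auto simp: set_add_iff)
    obtain u' v' where uv': "u' \<in> A" "v' \<in> B" "y = u' \<oplus>\<^bsub>M\<^esub> v'" using hy by (auto simp: set_add_iff)
    have "x \<oplus>\<^bsub>M\<^esub> y = (u \<oplus>\<^bsub>M\<^esub> u') \<oplus>\<^bsub>M\<^esub> (v \<oplus>\<^bsub>M\<^esub> v')"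
      using uv uv' a(1) b(1) by (simp add: subset_iff a_ac)
    then show ?thesis unfolding set_add_iff using uv uv' a(5) b(5) by blast
  qed
  show "c \<odot>\<^bsub>M\<^esub> x \<in> A <+>\<^bsub>M\<^esub> B" if hc: "c \<in> carrier R" and hx: "x \<in> A <+>\<^bsub>M\<^esub> B" for c x
  proof -
    obtain u v where uv: "u \<in> A" "v \<in> B" "x = u \<oplus>\<^bsub>M\<^esub> v" using hx by (auto simp: set_add_iff)
    have "c \<odot>\<^bsub>M\<^esub> x = c \<odot>\<^bsub>M\<^esub> u \<oplus>\<^bsub>M\<^esub> c \<odot>\<^bsub>M\<^esub> v"
      using uv hc a(1) b(1) by (auto simp: smult_r_distr subset_iff)
    then show ?thesis unfolding set_add_iff using uv hc a(4) b(4) by blast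
  qed
qed

lemma set_add_comm: "A \<subseteq> carrier M \<Longrightarrow> B \<subseteq> carrier M \<Longrightarrow> A <+>\<^bsub>M\<^esub> B = B <+>\<^bsub>M\<^esub> A"
proof -
  assume "A \<subseteq> carrier M" "B \<subseteq> carrier M"
  then have "\<And>x. x \<in> A <+>\<^bsub>M\<^esub> B \<longleftrightarrow> x \<in> B <+>\<^bsub>M\<^esub> A"
    unfolding set_add_iff by (metis a_comm subsetD)
  then show ?thesis by blast
qed

end

locale lrel = module R M for R :: "('a, 'b) ring_scheme" (structure) and M :: "('a, 'c) module" (structure) +
  fixes D assumes lr: "lin_rel R M D"
begin

lemma D_car: "(x, y) \<in> D \<Longrightarrow> x \<in> carrier M \<and> y \<in> carrier M"
  using lr unfolding lin_rel_def by auto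

lemma D_zero: "(\<zero>\<^bsub>M\<^esub>, \<zero>\<^bsub>M\<^esub>) \<in> D"
  using lr unfolding lin_rel_def by auto

lemma D_add: "(x, y) \<in> D \<Longrightarrow> (x', y') \<in> D \<Longrightarrow> (x \<oplus>\<^bsub>M\<^esub> x', y \<oplus>\<^bsub>M\<^esub> y') \<in> D"
  using lr unfolding lin_rel_def by auto

lemma D_smult: "a \<in> carrier R \<Longrightarrow> (x, y) \<in> D \<Longrightarrow> (a \<odot>\<^bsub>M\<^esub> x, a \<odot>\<^bsub>M\<^esub> y) \<in> D"
  using lr unfolding lin_rel_def by auto

lemma D_neg: "(x, y) \<in> D \<Longrightarrow> (\<ominus>\<^bsub>M\<^esub> x, \<ominus>\<^bsub>M\<^esub> y) \<in> D"
proof -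
  assume xy: "(x, y) \<in> D"
  have "(\<ominus> \<one> \<odot>\<^bsub>M\<^esub> x, \<ominus> \<one> \<odot>\<^bsub>M\<^esub> y) \<in> D" by (rule D_smult) (use xy in auto)
  then show ?thesis using D_car[OF xy] by (simp add: smult_l_minus)
qed

lemma D_diff: "(x, y) \<in> D \<Longrightarrow> (x', y') \<in> D \<Longrightarrow> (x \<ominus>\<^bsub>M\<^esub> x', y \<ominus>\<^bsub>M\<^esub> y') \<in> D"
  unfolding a_minus_def by (intro D_add D_neg)

lemma conv: "lrel R M (D\<inverse>)"
  using lr unfolding lrel_def lrel_axioms_def lin_rel_def
  by (auto simp: module_axioms)

lemma inf_sub: "submodule (rel_inf D) R M"
proof (rule submoduleI)
  show "rel_inf D \<subseteq> carrier M"
    unfolding rel_inf_def using D_car by blast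
  show "\<zero>\<^bsub>M\<^esub> \<in> rel_inf D"
    unfolding rel_inf_def using D_zero by (auto intro!: exI[of _ "\<lambda>n. \<zero>\<^bsub>M\<^esub>"])
  show "\<ominus>\<^bsub>M\<^esub> a \<in> rel_inf D" if hyp: "a \<in> rel_inf D" for a
  proof -
    obtain f where "f 0 = a" "\<forall>n. (f n, f (Suc n)) \<in> D"
      using hyp unfolding rel_inf_def by blast
    then show ?thesis unfolding rel_inf_def
      by (auto intro!: D_neg exI[of _ "\<lambda>n. \<ominus>\<^bsub>M\<^esub> (f n)"])
  qed
  show "a \<oplus>\<^bsub>M\<^esub> b \<in> rel_inf D" if hyp: "a \<in> rel_inf D" "b \<in> rel_inf D" for a b
  proof -
    obtain f g where "f 0 = a" "\<forall>n. (f n, f (Suc n)) \<in> D" "g 0 = b" "\<forall>n. (g n, g (Suc n)) \<in> D"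
      using hyp unfolding rel_inf_def by blast
    then show ?thesis unfolding rel_inf_def
      by (auto intro!: D_add exI[of _ "\<lambda>n. f n \<oplus>\<^bsub>M\<^esub> g n"])
  qed
  show "a \<odot>\<^bsub>M\<^esub> x \<in> rel_inf D" if hyp: "a \<in> carrier R" "x \<in> rel_inf D" for a x
  proof -
    obtain f where "f 0 = x" "\<forall>n. (f n, f (Suc n)) \<in> D"
      using hyp unfolding rel_inf_def by blast
    then show ?thesis unfolding rel_inf_def using that
      by (auto intro!: D_smult exI[of _ "\<lambda>n. a \<odot>\<^bsub>M\<^esub> (f n)"])
  qed
qed

lemma fin_sub: "submodule (rel_fin M D) R M"
proof (rule submoduleI)
  show "rel_fin M D \<subseteq> carrier M"
    unfolding rel_fin_def using D_car by blast
  show "\<zero>\<^bsub>M\<^esub> \<in> rel_fin M D"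
    unfolding rel_fin_def using D_zero by (auto intro!: exI[of _ "\<lambda>n. \<zero>\<^bsub>M\<^esub>"])
  show "\<ominus>\<^bsub>M\<^esub> a \<in> rel_fin M D" if hyp: "a \<in> rel_fin M D" for a
  proof -
    obtain f N where "f 0 = a" "\<forall>n. (f n, f (Suc n)) \<in> D" "\<forall>n\<ge>N. f n = \<zero>\<^bsub>M\<^esub>"
      using hyp unfolding rel_fin_def by blast
    then show ?thesis unfolding rel_fin_def
      by (auto intro!: D_neg exI[of _ "\<lambda>n. \<ominus>\<^bsub>M\<^esub> (f n)"] exI[of _ N])
  qed
  show "a \<oplus>\<^bsub>M\<^esub> b \<in> rel_fin M D" if hyp: "a \<in> rel_fin M D" "b \<in> rel_fin M D" for a b
  proof -
    obtain f g N1 N2 where "f 0 = a" "\<forall>n. (f n, f (Suc n)) \<in> D" "g 0 = b" "\<forall>n. (g n, g (Suc n)) \<in> D"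
      "\<forall>n\<ge>N1. f n = \<zero>\<^bsub>M\<^esub>" "\<forall>n\<ge>N2. g n = \<zero>\<^bsub>M\<^esub>"
      using hyp unfolding rel_fin_def by blast
    then show ?thesis unfolding rel_fin_def
      by (auto intro!: D_add exI[of _ "\<lambda>n. f n \<oplus>\<^bsub>M\<^esub> g n"] exI[of _ "max N1 N2"])
  qed
  show "a \<odot>\<^bsub>M\<^esub> x \<in> rel_fin M D" if hyp: "a \<in> carrier R" "x \<in> rel_fin M D" for a x
  proof -
    obtain f N where "f 0 = x" "\<forall>n. (f n, f (Suc n)) \<in> D" "\<forall>n\<ge>N. f n = \<zero>\<^bsub>M\<^esub>"
      using hyp unfolding rel_fin_def by blast
    then show ?thesis unfolding rel_fin_def using that
      by (auto intro!: D_smult exI[of _ "\<lambda>n. a \<odot>\<^bsub>M\<^esub> (f n)"] exI[of _ N])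
  qed
qed


lemma sharp_sub: "submodule (rel_sharp D) R M"
  unfolding rel_sharp_def using inf_sub lrel.inf_sub[OF conv] by (rule sub_inter)

lemma flat_sub: "submodule (rel_flat M D) R M"
  unfolding rel_flat_def
  by (intro sub_sum sub_inter inf_sub fin_sub lrel.inf_sub[OF conv] lrel.fin_sub[OF conv])

lemma flat_sub_sharp: "rel_flat M D \<subseteq> rel_sharp D"
proof
  fix x assume "x \<in> rel_flat M D"
  then obtain u v where uv: "u \<in> rel_inf D \<inter> rel_fin M (D\<inverse>)" "v \<in> rel_inf (D\<inverse>) \<inter> rel_fin M D"
    "x = u \<oplus>\<^bsub>M\<^esub> v"
    unfolding rel_flat_def by (auto simp: set_add_iff)
  have "u \<in> rel_sharp D" "v \<in> rel_sharp D"
    using uv fin_sub_inf[of M D] fin_sub_inf[of M "D\<inverse>"] unfolding rel_sharp_def by auto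
  then show "x \<in> rel_sharp D" using uv(3) subE(5)[OF sharp_sub] by auto
qed

lemma sharp_conv: "rel_sharp (D\<inverse>) = rel_sharp D"
  unfolding rel_sharp_def by auto

lemma flat_conv: "rel_flat M (D\<inverse>) = rel_flat M D"
  unfolding rel_flat_def using subE(1)[OF inf_sub] subE(1)[OF lrel.inf_sub[OF conv]]
  by (subst set_add_comm) auto

lemma part1:
  assumes x: "x \<in> rel_sharp D" "x \<in> rel_fin M (D\<inverse>) <+>\<^bsub>M\<^esub> rel_fin M D"
  shows "x \<in> rel_flat M D"
proof -
  obtain u v where uv: "u \<in> rel_fin M (D\<inverse>)" "v \<in> rel_fin M D" "x = u \<oplus>\<^bsub>M\<^esub> v"
    using x(2) by (auto simp: set_add_iff)
  have car: "u \<in> carrier M" "v \<in> carrier M"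
    using uv subE(1)[OF fin_sub] subE(1)[OF lrel.fin_sub[OF conv]] by auto
  have u: "u = x \<ominus>\<^bsub>M\<^esub> v" using car uv(3) by (simp add: a_minus_def a_assoc M.r_neg)
  have v: "v = x \<ominus>\<^bsub>M\<^esub> u" using car uv(3) by (simp add: a_minus_def a_comm[of u v] a_assoc M.r_neg)
  have "u \<in> rel_inf D"
    using u x(1) uv(2) fin_sub_inf[of M D] subE(6)[OF inf_sub] unfolding rel_sharp_def by auto
  moreover have "v \<in> rel_inf (D\<inverse>)"
    using v x(1) uv(1) fin_sub_inf[of M "D\<inverse>"] subE(6)[OF lrel.inf_sub[OF conv]]
    unfolding rel_sharp_def by auto
  ultimately show ?thesis unfolding rel_flat_def using uv by (auto simp: set_add_iff)
qed

lemma KL: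
  assumes d: "d \<in> rel_flat M D" and de: "(d, e) \<in> D" and e: "e \<in> rel_sharp D"
  shows "e \<in> rel_flat M D"
proof -
  obtain a b where ab: "a \<in> rel_inf D \<inter> rel_fin M (D\<inverse>)" "b \<in> rel_inf (D\<inverse>) \<inter> rel_fin M D"
    "d = a \<oplus>\<^bsub>M\<^esub> b"
    using d unfolding rel_flat_def set_add_iff by blast
  obtain b1 where b1: "(b, b1) \<in> D" "b1 \<in> rel_fin M D" using step_fin[of b M D] ab(2) by blast
  have b1i: "b1 \<in> rel_inf (D\<inverse>)" using b1(1) ab(2) by (intro prepend_inf[of b1 b]) auto
  have car: "b \<in> carrier M" "b1 \<in> carrier M" "e \<in> carrier M"
    using D_car[OF b1(1)] D_car[OF de] by auto
  have "a \<in> carrier M" using ab(1) subE(1)[OF inf_sub] by blast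
  note car = car this
  have "(d \<ominus>\<^bsub>M\<^esub> b, e \<ominus>\<^bsub>M\<^esub> b1) \<in> D" using de b1(1) by (rule D_diff)
  moreover have "d \<ominus>\<^bsub>M\<^esub> b = a" using ab(3) car by (simp add: a_minus_def a_assoc M.r_neg)
  ultimately have ae: "(a, e \<ominus>\<^bsub>M\<^esub> b1) \<in> D" by simp
  have "e \<ominus>\<^bsub>M\<^esub> b1 \<in> rel_fin M (D\<inverse>)" using ae ab(1) prepend_fin[of "e \<ominus>\<^bsub>M\<^esub> b1" a "D\<inverse>" M] by blast
  moreover have "e \<ominus>\<^bsub>M\<^esub> b1 \<in> rel_inf D"
    using e b1(2) fin_sub_inf[of M D] subE(6)[OF inf_sub] unfolding rel_sharp_def by auto
  moreover have "e = (e \<ominus>\<^bsub>M\<^esub> b1) \<oplus>\<^bsub>M\<^esub> b1" using car by (simp add: a_minus_def a_assoc M.l_neg)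
  ultimately have "e \<ominus>\<^bsub>M\<^esub> b1 \<in> rel_inf D \<inter> rel_fin M (D\<inverse>)"
    "b1 \<in> rel_inf (D\<inverse>) \<inter> rel_fin M D" "e = (e \<ominus>\<^bsub>M\<^esub> b1) \<oplus>\<^bsub>M\<^esub> b1"
    using b1 b1i by blast+
  then show ?thesis unfolding rel_flat_def set_add_iff by blast
qed

lemma KL':
  assumes d: "d \<in> rel_flat M D" and de: "(e, d) \<in> D" and e: "e \<in> rel_sharp D"
  shows "e \<in> rel_flat M D"
  using lrel.KL[OF conv, of d e] assms flat_conv sharp_conv by auto

lemma sharp_step: "m \<in> rel_sharp D \<Longrightarrow> \<exists>m'. (m, m') \<in> D \<and> m' \<in> rel_sharp D"
proof -
  assume m: "m \<in> rel_sharp D"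
  then obtain m1 where "(m, m1) \<in> D" "m1 \<in> rel_inf D" using step_inf[of m D] unfolding rel_sharp_def by blast
  moreover have "m1 \<in> rel_inf (D\<inverse>)" using calculation(1) m unfolding rel_sharp_def
    by (intro prepend_inf[of m1 m]) auto
  ultimately show ?thesis unfolding rel_sharp_def by auto
qed

lemma sharp_back: "m \<in> rel_sharp D \<Longrightarrow> \<exists>m'. (m', m) \<in> D \<and> m' \<in> rel_sharp D"
  using lrel.sharp_step[OF conv] sharp_conv by auto

end




lemma quot_simps:
  "carrier (quot M S F) = {F +>\<^bsub>M\<^esub> x | x. x \<in> S}"
  "(\<oplus>\<^bsub>quot M S F\<^esub>) = set_add M"
  "\<zero>\<^bsub>quot M S F\<^esub> = F"
  "smult (quot M S F) = (\<lambda>a U. F <+>\<^bsub>M\<^esub> ((\<lambda>x. a \<odot>\<^bsub>M\<^esub> x) ` U))"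
  unfolding quot_def by auto

context module
begin

lemma M_ag: "abelian_group M" by unfold_locales

lemma sub_abelian: "submodule H R M \<Longrightarrow> abelian_subgroup H M"
  by (intro abelian_subgroupI3 additive_subgroupI submodule.axioms(1) M_ag)

lemma coset_eq:
  assumes H: "submodule H R M" and x: "x \<in> carrier M" and y: "y \<in> carrier M"
  shows "(H +>\<^bsub>M\<^esub> x = H +>\<^bsub>M\<^esub> y) \<longleftrightarrow> x \<ominus>\<^bsub>M\<^esub> y \<in> H"
proof -
  interpret abelian_subgroup H M by (rule sub_abelian[OF H])
  show ?thesis
  proof
    assume eq: "H +>\<^bsub>M\<^esub> x = H +>\<^bsub>M\<^esub> y"
    have "x \<in> H +>\<^bsub>M\<^esub> y" using a_rcos_self[OF x] eq by simp
    then have "x \<oplus>\<^bsub>M\<^esub> \<ominus>\<^bsub>M\<^esub> y \<in> H" using a_rcos_module[OF y x] by simp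
    then show "x \<ominus>\<^bsub>M\<^esub> y \<in> H" by (simp add: a_minus_def)
  next
    assume "x \<ominus>\<^bsub>M\<^esub> y \<in> H"
    then have "x \<in> H +>\<^bsub>M\<^esub> y" using a_rcos_module[OF y x] by (simp add: a_minus_def)
    then show "H +>\<^bsub>M\<^esub> x = H +>\<^bsub>M\<^esub> y" using a_repr_independence'[of x y] y by simp
  qed
qed

lemma coset_sum:
  assumes H: "submodule H R M" and x: "x \<in> carrier M" and y: "y \<in> carrier M"
  shows "(H +>\<^bsub>M\<^esub> x) <+>\<^bsub>M\<^esub> (H +>\<^bsub>M\<^esub> y) = H +>\<^bsub>M\<^esub> (x \<oplus>\<^bsub>M\<^esub> y)"
proof -
  interpret abelian_subgroup H M by (rule sub_abelian[OF H])
  show ?thesis using a_rcos_sum[OF x y] .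
qed

lemma coset_zero: "submodule H R M \<Longrightarrow> H +>\<^bsub>M\<^esub> \<zero>\<^bsub>M\<^esub> = H"
  using subE(1) by (simp add: a_coset_add_zero)

lemma coset_smult:
  assumes H: "submodule H R M" and a: "a \<in> carrier R" and x: "x \<in> carrier M"
  shows "H <+>\<^bsub>M\<^esub> ((\<lambda>z. a \<odot>\<^bsub>M\<^esub> z) ` (H +>\<^bsub>M\<^esub> x)) = H +>\<^bsub>M\<^esub> (a \<odot>\<^bsub>M\<^esub> x)"
proof -
  note h = subE[OF H]
  have "z \<in> H <+>\<^bsub>M\<^esub> ((\<lambda>z. a \<odot>\<^bsub>M\<^esub> z) ` (H +>\<^bsub>M\<^esub> x)) \<longleftrightarrow> z \<in> H +>\<^bsub>M\<^esub> (a \<odot>\<^bsub>M\<^esub> x)" for z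

  proof
    assume "z \<in> H <+>\<^bsub>M\<^esub> ((\<lambda>z. a \<odot>\<^bsub>M\<^esub> z) ` (H +>\<^bsub>M\<^esub> x))"
    then obtain f g where fg: "f \<in> H" "g \<in> H" "z = f \<oplus>\<^bsub>M\<^esub> a \<odot>\<^bsub>M\<^esub> (g \<oplus>\<^bsub>M\<^esub> x)"
      unfolding set_add_iff a_r_coset_def' by blast
    have fc: "f \<in> carrier M" "g \<in> carrier M" using fg h(1) by auto
    have "z = (f \<oplus>\<^bsub>M\<^esub> a \<odot>\<^bsub>M\<^esub> g) \<oplus>\<^bsub>M\<^esub> a \<odot>\<^bsub>M\<^esub> x"
      using fg(3) fc a x by (simp add: smult_r_distr a_assoc)
    moreover have "f \<oplus>\<^bsub>M\<^esub> a \<odot>\<^bsub>M\<^esub> g \<in> H" using h(4,5) fg a by blast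
    ultimately show "z \<in> H +>\<^bsub>M\<^esub> (a \<odot>\<^bsub>M\<^esub> x)" unfolding rcos_iff by blast
  next
    assume "z \<in> H +>\<^bsub>M\<^esub> (a \<odot>\<^bsub>M\<^esub> x)"
    then obtain f where f: "f \<in> H" "z = f \<oplus>\<^bsub>M\<^esub> a \<odot>\<^bsub>M\<^esub> x" unfolding rcos_iff by blast
    have "x = \<zero>\<^bsub>M\<^esub> \<oplus>\<^bsub>M\<^esub> x" using x by simp
    then have "x \<in> H +>\<^bsub>M\<^esub> x" using h(2) unfolding rcos_iff by blast
    then show "z \<in> H <+>\<^bsub>M\<^esub> ((\<lambda>z. a \<odot>\<^bsub>M\<^esub> z) ` (H +>\<^bsub>M\<^esub> x))"
      using f unfolding set_add_iff by blast
  qed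
  then show ?thesis by blast
qed

end

locale pmod = module R M for R :: "('a, 'b) ring_scheme" (structure) and M :: "('a, 'c) module" (structure)
begin

lemma quot_module:
  assumes S: "submodule S R M" and F: "submodule F R M" and FS: "F \<subseteq> S"
  shows "module R (quot M S F)"
proof -
  note s = subE[OF S] and f = subE[OF F]
  have rep: "\<exists>x\<in>S. U = F +>\<^bsub>M\<^esub> x" if "U \<in> carrier (quot M S F)" for U
    using that by (auto simp: quot_simps)
  have inQ: "F +>\<^bsub>M\<^esub> x \<in> carrier (quot M S F)" if "x \<in> S" for x
    using that by (auto simp: quot_simps)
  have sum: "(F +>\<^bsub>M\<^esub> x) \<oplus>\<^bsub>quot M S F\<^esub> (F +>\<^bsub>M\<^esub> y) = F +>\<^bsub>M\<^esub> (x \<oplus>\<^bsub>M\<^esub> y)"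
    if "x \<in> S" "y \<in> S" for x y
    using coset_sum[OF F, of x y] that s(1) by (auto simp: quot_simps)
  have sm: "a \<odot>\<^bsub>quot M S F\<^esub> (F +>\<^bsub>M\<^esub> x) = F +>\<^bsub>M\<^esub> (a \<odot>\<^bsub>M\<^esub> x)"
    if "a \<in> carrier R" "x \<in> S" for a x
    using coset_smult[OF F, of a x] that s(1) by (auto simp: quot_simps)
  have z: "\<zero>\<^bsub>quot M S F\<^esub> = F +>\<^bsub>M\<^esub> \<zero>\<^bsub>M\<^esub>" using coset_zero[OF F] by (simp add: quot_simps)
  show ?thesis
  proof (rule moduleI)
    show "cring R" by (rule is_cring)
    show "abelian_group (quot M S F)"
    proof (rule abelian_groupI)
      fix U V W
      assume U: "U \<in> carrier (quot M S F)"
      then obtain x where x: "x \<in> S" "U = F +>\<^bsub>M\<^esub> x" using rep by blast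
      have xc: "x \<in> carrier M" using x s(1) by auto
      show "\<zero>\<^bsub>quot M S F\<^esub> \<oplus>\<^bsub>quot M S F\<^esub> U = U"
        using z sum[OF s(2) x(1)] x xc by simp
      show "\<exists>V\<in>carrier (quot M S F). V \<oplus>\<^bsub>quot M S F\<^esub> U = \<zero>\<^bsub>quot M S F\<^esub>"
        using sum[OF s(3)[OF x(1)] x(1)] inQ[OF s(3)[OF x(1)]] x xc z by (auto simp: M.l_neg)
      {
        assume V: "V \<in> carrier (quot M S F)"
        then obtain y where y: "y \<in> S" "V = F +>\<^bsub>M\<^esub> y" using rep by blast
        have yc: "y \<in> carrier M" using y s(1) by auto
        show "U \<oplus>\<^bsub>quot M S F\<^esub> V \<in> carrier (quot M S F)"
          using sum[OF x(1) y(1)] inQ[OF s(5)[OF x(1) y(1)]] x y by simp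
        show "U \<oplus>\<^bsub>quot M S F\<^esub> V = V \<oplus>\<^bsub>quot M S F\<^esub> U"
          using sum[OF x(1) y(1)] sum[OF y(1) x(1)] x y xc yc by (simp add: a_comm)
        assume W: "W \<in> carrier (quot M S F)"
        then obtain w where w: "w \<in> S" "W = F +>\<^bsub>M\<^esub> w" using rep by blast
        have wc: "w \<in> carrier M" using w s(1) by auto
        show "U \<oplus>\<^bsub>quot M S F\<^esub> V \<oplus>\<^bsub>quot M S F\<^esub> W = U \<oplus>\<^bsub>quot M S F\<^esub> (V \<oplus>\<^bsub>quot M S F\<^esub> W)"
          using x y w xc yc wc sum s(5) by (simp add: a_assoc)
      }
    next
      show "\<zero>\<^bsub>quot M S F\<^esub> \<in> carrier (quot M S F)" using z inQ[OF s(2)] by simp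
    qed
  next
    fix a b U V
    assume a: "a \<in> carrier R" and U: "U \<in> carrier (quot M S F)"
    then obtain x where x: "x \<in> S" "U = F +>\<^bsub>M\<^esub> x" using rep by blast
    have xc: "x \<in> carrier M" using x s(1) by auto
    show "a \<odot>\<^bsub>quot M S F\<^esub> U \<in> carrier (quot M S F)"
      using sm[OF a x(1)] inQ[OF s(4)[OF a x(1)]] x by simp
    show "(a \<otimes>\<^bsub>R\<^esub> b) \<odot>\<^bsub>quot M S F\<^esub> U = a \<odot>\<^bsub>quot M S F\<^esub> (b \<odot>\<^bsub>quot M S F\<^esub> U)"
      if b: "b \<in> carrier R"
      using sm a b x xc s(4) by (simp add: smult_assoc1)
    show "(a \<oplus>\<^bsub>R\<^esub> b) \<odot>\<^bsub>quot M S F\<^esub> U = a \<odot>\<^bsub>quot M S F\<^esub> U \<oplus>\<^bsub>quot M S F\<^esub> b \<odot>\<^bsub>quot M S F\<^esub> U"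
      if b: "b \<in> carrier R"
      using sm a b x xc s(4) sum by (simp add: smult_l_distr)
    show "a \<odot>\<^bsub>quot M S F\<^esub> (U \<oplus>\<^bsub>quot M S F\<^esub> V) = a \<odot>\<^bsub>quot M S F\<^esub> U \<oplus>\<^bsub>quot M S F\<^esub> a \<odot>\<^bsub>quot M S F\<^esub> V"
      if V: "V \<in> carrier (quot M S F)"
    proof -
      obtain y where y: "y \<in> S" "V = F +>\<^bsub>M\<^esub> y" using rep V by blast
      have yc: "y \<in> carrier M" using y s(1) by auto
      show ?thesis using sm a x y xc yc s(4,5) sum by (simp add: smult_r_distr)
    qed
  next
    fix U assume U: "U \<in> carrier (quot M S F)"
    then obtain x where x: "x \<in> S" "U = F +>\<^bsub>M\<^esub> x" using rep by blast
    have xc: "x \<in> carrier M" using x s(1) by auto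
    show "\<one>\<^bsub>R\<^esub> \<odot>\<^bsub>quot M S F\<^esub> U = U" using sm[OF _ x(1), of "\<one>\<^bsub>R\<^esub>"] x xc by simp
  qed
qed

end




lemma hom_basic:
  assumes A: "module R A" and B: "module R B" and h: "mod_hom R A B h"
  shows "\<And>x. x \<in> carrier A \<Longrightarrow> h x \<in> carrier B"
    "\<And>x y. x \<in> carrier A \<Longrightarrow> y \<in> carrier A \<Longrightarrow> h (x \<oplus>\<^bsub>A\<^esub> y) = h x \<oplus>\<^bsub>B\<^esub> h y"
    "\<And>a x. a \<in> carrier R \<Longrightarrow> x \<in> carrier A \<Longrightarrow> h (a \<odot>\<^bsub>A\<^esub> x) = a \<odot>\<^bsub>B\<^esub> h x"
    "h \<zero>\<^bsub>A\<^esub> = \<zero>\<^bsub>B\<^esub>"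
    "\<And>x. x \<in> carrier A \<Longrightarrow> h (\<ominus>\<^bsub>A\<^esub> x) = \<ominus>\<^bsub>B\<^esub> h x"
    "\<And>x y. x \<in> carrier A \<Longrightarrow> y \<in> carrier A \<Longrightarrow> h (x \<ominus>\<^bsub>A\<^esub> y) = h x \<ominus>\<^bsub>B\<^esub> h y"
proof -
  interpret A: module R A by fact
  interpret B: module R B by fact
  show c: "\<And>x. x \<in> carrier A \<Longrightarrow> h x \<in> carrier B"
    and ad: "\<And>x y. x \<in> carrier A \<Longrightarrow> y \<in> carrier A \<Longrightarrow> h (x \<oplus>\<^bsub>A\<^esub> y) = h x \<oplus>\<^bsub>B\<^esub> h y"
    and sm: "\<And>a x. a \<in> carrier R \<Longrightarrow> x \<in> carrier A \<Longrightarrow> h (a \<odot>\<^bsub>A\<^esub> x) = a \<odot>\<^bsub>B\<^esub> h x"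
    using h unfolding mod_hom_def by auto
  have "h \<zero>\<^bsub>A\<^esub> = h (\<zero>\<^bsub>R\<^esub> \<odot>\<^bsub>A\<^esub> \<zero>\<^bsub>A\<^esub>)" by simp
  also have "\<dots> = \<zero>\<^bsub>B\<^esub>" using sm[of "\<zero>\<^bsub>R\<^esub>" "\<zero>\<^bsub>A\<^esub>"] c[of "\<zero>\<^bsub>A\<^esub>"] by simp
  finally show "h \<zero>\<^bsub>A\<^esub> = \<zero>\<^bsub>B\<^esub>" .
  show ng: "h (\<ominus>\<^bsub>A\<^esub> x) = \<ominus>\<^bsub>B\<^esub> h x" if x: "x \<in> carrier A" for x
  proof -
    have "\<ominus>\<^bsub>A\<^esub> x = (\<ominus>\<^bsub>R\<^esub> \<one>\<^bsub>R\<^esub>) \<odot>\<^bsub>A\<^esub> x" using x by (simp add: A.smult_l_minus)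
    then have "h (\<ominus>\<^bsub>A\<^esub> x) = (\<ominus>\<^bsub>R\<^esub> \<one>\<^bsub>R\<^esub>) \<odot>\<^bsub>B\<^esub> h x" using sm x by simp
    then show ?thesis using c x by (simp add: B.smult_l_minus)
  qed
  show "\<And>x y. x \<in> carrier A \<Longrightarrow> y \<in> carrier A \<Longrightarrow> h (x \<ominus>\<^bsub>A\<^esub> y) = h x \<ominus>\<^bsub>B\<^esub> h y"
    using ad ng by (simp add: a_minus_def)
qed

lemma hom_finsum:
  assumes A: "module R A" and B: "module R B" and h: "mod_hom R A B h"
    and fin: "finite Xs" and f: "f \<in> Xs \<rightarrow> carrier A"
  shows "h (\<Oplus>\<^bsub>A\<^esub>i\<in>Xs. f i) = (\<Oplus>\<^bsub>B\<^esub>i\<in>Xs. h (f i))"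
  using fin f
proof (induction Xs rule: finite_induct)
  case empty
  interpret A: module R A by fact
  interpret B: module R B by fact
  show ?case using hom_basic(4)[OF A B h] by simp
next
  case (insert x F)
  interpret A: module R A by fact
  interpret B: module R B by fact
  note hb = hom_basic[OF A B h]
  have fF: "f \<in> F \<rightarrow> carrier A" "f x \<in> carrier A" using insert by auto
  have "h (\<Oplus>\<^bsub>A\<^esub>i\<in>insert x F. f i) = h (f x \<oplus>\<^bsub>A\<^esub> (\<Oplus>\<^bsub>A\<^esub>i\<in>F. f i))"
    using insert fF by (simp add: A.finsum_insert)
  also have "\<dots> = h (f x) \<oplus>\<^bsub>B\<^esub> (\<Oplus>\<^bsub>B\<^esub>i\<in>F. h (f i))"
    using hb(2) fF insert by (simp add: A.finsum_closed)
  also have "\<dots> = (\<Oplus>\<^bsub>B\<^esub>i\<in>insert x F. h (f i))"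
    using insert fF hb(1) by (subst B.finsum_insert) (auto simp: Pi_def)
  finally show ?case .
qed

context pmod
begin

lemma ideal_mod_car_el: "x \<in> ideal_mod I M \<Longrightarrow> I \<subseteq> carrier R \<Longrightarrow> x \<in> carrier M"
  by (induct x rule: ideal_mod.induct) auto

lemma ideal_mod_car: "I \<subseteq> carrier R \<Longrightarrow> ideal_mod I M \<subseteq> carrier M"
  using ideal_mod_car_el by blast

lemma ideal_mod_add:
  assumes I: "I \<subseteq> carrier R" and x: "x \<in> ideal_mod I M" and y: "y \<in> ideal_mod I M"
  shows "x \<oplus>\<^bsub>M\<^esub> y \<in> ideal_mod I M"
  using y
proof induct
  case zero
  then show ?case using x ideal_mod_car[OF I] by auto
next
  case (step z a m)
  have "x \<oplus>\<^bsub>M\<^esub> (z \<oplus>\<^bsub>M\<^esub> a \<odot>\<^bsub>M\<^esub> m) = (x \<oplus>\<^bsub>M\<^esub> z) \<oplus>\<^bsub>M\<^esub> a \<odot>\<^bsub>M\<^esub> m"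
  proof -
    have "x \<in> carrier M" "z \<in> carrier M" "a \<in> carrier R"
      using step x ideal_mod_car[OF I] I by auto
    then show ?thesis using step(4) by (simp add: a_assoc)
  qed
  then show ?case using step ideal_mod.step by metis
qed

lemma ideal_mod_gen: "a \<in> I \<Longrightarrow> I \<subseteq> carrier R \<Longrightarrow> m \<in> carrier M \<Longrightarrow> a \<odot>\<^bsub>M\<^esub> m \<in> ideal_mod I M"
  using ideal_mod.step[OF ideal_mod.zero, of a I m M] by auto

lemma ideal_mod_sub:
  assumes I: "ideal I R"
  shows "submodule (ideal_mod I M) R M"
proof -
  have Ic: "I \<subseteq> carrier R" using I by (simp add: ideal.axioms(1) additive_subgroup.a_subset)
  have sm: "c \<odot>\<^bsub>M\<^esub> x \<in> ideal_mod I M" if c: "c \<in> carrier R" and x: "x \<in> ideal_mod I M" for c x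
    using x
  proof induct
    case zero then show ?case using c by (simp add: ideal_mod.zero)
  next
    case (step z a m)
    have zc: "z \<in> carrier M" using step ideal_mod_car[OF Ic] by auto
    have "c \<odot>\<^bsub>M\<^esub> (z \<oplus>\<^bsub>M\<^esub> a \<odot>\<^bsub>M\<^esub> m) = c \<odot>\<^bsub>M\<^esub> z \<oplus>\<^bsub>M\<^esub> (c \<otimes> a) \<odot>\<^bsub>M\<^esub> m"
      using step zc c Ic by (auto simp: smult_r_distr smult_assoc1)
    moreover have "c \<otimes> a \<in> I" using I c step by (simp add: ideal.I_l_closed)
    ultimately show ?case using step ideal_mod.step by metis
  qed
  show ?thesis
  proof (rule submoduleI)
    show "ideal_mod I M \<subseteq> carrier M" using ideal_mod_car[OF Ic] .
    show "\<zero>\<^bsub>M\<^esub> \<in> ideal_mod I M" by (rule ideal_mod.zero)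
    show "\<ominus>\<^bsub>M\<^esub> a \<in> ideal_mod I M" if "a \<in> ideal_mod I M" for a
    proof -
      have "\<ominus>\<^bsub>M\<^esub> a = (\<ominus> \<one>) \<odot>\<^bsub>M\<^esub> a" using that ideal_mod_car[OF Ic] by (auto simp: smult_l_minus)
      then show ?thesis using sm[of "\<ominus> \<one>" a] that by simp
    qed
    show "a \<oplus>\<^bsub>M\<^esub> b \<in> ideal_mod I M" if "a \<in> ideal_mod I M" "b \<in> ideal_mod I M" for a b
      using ideal_mod_add[OF Ic] that by blast
    show "c \<odot>\<^bsub>M\<^esub> x \<in> ideal_mod I M" if "c \<in> carrier R" "x \<in> ideal_mod I M" for c x
      using sm that by blast
  qed
qed

lemma ideal_mod_finsum:
  assumes I: "I \<subseteq> carrier R" and fin: "finite Xs" and Xs: "Xs \<subseteq> carrier M"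
    and c: "\<And>q. q \<in> Xs \<Longrightarrow> c q \<in> I"
  shows "(\<Oplus>\<^bsub>M\<^esub>q\<in>Xs. c q \<odot>\<^bsub>M\<^esub> q) \<in> ideal_mod I M"
  using fin Xs c
proof (induction Xs rule: finite_induct)
  case empty then show ?case by (simp add: ideal_mod.zero)
next
  case (insert x F)
  have "(\<Oplus>\<^bsub>M\<^esub>q\<in>insert x F. c q \<odot>\<^bsub>M\<^esub> q) = c x \<odot>\<^bsub>M\<^esub> x \<oplus>\<^bsub>M\<^esub> (\<Oplus>\<^bsub>M\<^esub>q\<in>F. c q \<odot>\<^bsub>M\<^esub> q)"
    using insert I by (subst finsum_insert) (auto simp: Pi_def subset_iff)
  moreover have "c x \<odot>\<^bsub>M\<^esub> x \<in> ideal_mod I M" using insert I by (intro ideal_mod_gen) auto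
  ultimately show ?case using insert ideal_mod_add[OF I] by auto
qed

end

lemma (in cring) maximal_solve:
  assumes m: "maximalideal m R" and a: "a \<in> carrier R" "a \<notin> m" and r: "r \<in> carrier R"
  shows "\<exists>c\<in>carrier R. r \<ominus> c \<otimes> a \<in> m"
proof -
  interpret maximalideal m R by fact
  let ?J = "m <+>\<^bsub>R\<^esub> PIdl a"
  have J: "ideal ?J R" by (intro add_ideals is_ideal cgenideal_ideal a)
  have mJ: "m \<subseteq> ?J"
  proof
    fix i assume i: "i \<in> m"
    have "i = i \<oplus> \<zero> \<otimes> a" using i a by simp
    moreover have "\<zero> \<otimes> a \<in> PIdl a" unfolding cgenideal_def by blast
    ultimately show "i \<in> ?J" using i unfolding set_add_iff by blast
  qed
  have Jc: "?J \<subseteq> carrier R" using J by (simp add: ideal.axioms(1) additive_subgroup.a_subset)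
  have "a \<in> ?J"
  proof -
    have "a = \<zero> \<oplus> \<one> \<otimes> a" using a by simp
    moreover have "\<one> \<otimes> a \<in> PIdl a" unfolding cgenideal_def by blast
    moreover have "\<zero> \<in> m" by simp
    ultimately show ?thesis unfolding set_add_iff by blast
  qed
  then have "?J \<noteq> m" using a(2) by metis
  then have "?J = carrier R" using I_maximal[OF J mJ Jc] by blast
  then have "r \<in> ?J" using r by simp
  then obtain i c where ic: "i \<in> m" "c \<in> carrier R" "r = i \<oplus> c \<otimes> a"
    unfolding set_add_iff cgenideal_def by blast
  have "r \<ominus> c \<otimes> a = i" using ic a by (simp add: a_minus_def a_assoc r_neg)
  then show ?thesis using ic by blast
qed




lemma lift:
  fixes R :: "('r, 'x) ring_scheme" and P :: "('r, 'p) module" and A :: "('r, 'a) module"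
    and B :: "('r, 'b) module"
  assumes P: "projective R P" and A: "module R A" and B: "module R B"
    and g: "mod_hom R P B g" and h: "mod_hom R A B h"
    and surj: "\<forall>p\<in>carrier P. \<exists>a\<in>carrier A. h a = g p"
  shows "\<exists>f. mod_hom R P A f \<and> (\<forall>p\<in>carrier P. h (f p) = g p)"
proof -
  have MP: "module R P" using P unfolding projective_def by blast
  interpret P: module R P by fact
  interpret A: module R A by fact
  interpret B: module R B by fact
  obtain s where s1: "\<forall>p\<in>carrier P. s p \<in> free_carrier R P \<and> free_eps R P (s p) = p"
    and s2: "\<forall>p\<in>carrier P. \<forall>q\<in>carrier P. s (p \<oplus>\<^bsub>P\<^esub> q) = (\<lambda>z. s p z \<oplus>\<^bsub>R\<^esub> s q z)"
    and s3: "\<forall>a\<in>carrier R. \<forall>p\<in>carrier P. s (a \<odot>\<^bsub>P\<^esub> p) = (\<lambda>z. a \<otimes>\<^bsub>R\<^esub> s p z)"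
    using P unfolding projective_def by blast
  define e where "e q = (SOME a. a \<in> carrier A \<and> h a = g q)" for q
  have e: "e q \<in> carrier A \<and> h (e q) = g q" if "q \<in> carrier P" for q
    unfolding e_def by (rule someI_ex) (use surj that in blast)
  define supp where "supp \<phi> = {q \<in> carrier P. \<phi> q \<noteq> \<zero>\<^bsub>R\<^esub>}" for \<phi> :: "'p \<Rightarrow> 'r"
  define lin where "lin \<phi> = (\<Oplus>\<^bsub>A\<^esub>q\<in>supp \<phi>. \<phi> q \<odot>\<^bsub>A\<^esub> e q)" for \<phi>
  define f where "f p = lin (s p)" for p
  have fcR: "\<phi> q \<in> carrier R" if "\<phi> \<in> free_carrier R P" for \<phi> q
    using that unfolding free_carrier_def by blast
  have fin: "finite (supp \<phi>)" if "\<phi> \<in> free_carrier R P" for \<phi>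
  proof -
    have "finite {q. \<phi> q \<noteq> \<zero>\<^bsub>R\<^esub>}" using that unfolding free_carrier_def by blast
    then show ?thesis unfolding supp_def by (rule rev_finite_subset) blast
  qed
  have suppc: "supp \<phi> \<subseteq> carrier P" for \<phi> unfolding supp_def by blast
  have ext: "lin \<phi> = (\<Oplus>\<^bsub>A\<^esub>q\<in>Y. \<phi> q \<odot>\<^bsub>A\<^esub> e q)"
    if ph: "\<phi> \<in> free_carrier R P" and Y: "finite Y" "supp \<phi> \<subseteq> Y" "Y \<subseteq> carrier P" for \<phi> Y
    unfolding lin_def
  proof (rule A.add.finprod_mono_neutral_cong_left)
    show "finite Y" "supp \<phi> \<subseteq> Y" by fact+
    show "\<phi> i \<odot>\<^bsub>A\<^esub> e i = \<zero>\<^bsub>A\<^esub>" if "i \<in> Y - supp \<phi>" for i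
      using that Y(3) e[of i] unfolding supp_def by auto
    show "\<phi> x \<odot>\<^bsub>A\<^esub> e x = \<phi> x \<odot>\<^bsub>A\<^esub> e x" for x by simp
    show "(\<lambda>q. \<phi> q \<odot>\<^bsub>A\<^esub> e q) \<in> Y \<rightarrow> carrier A"
      using Y(3) e fcR[OF ph] by auto
  qed
  have fcar: "f p \<in> carrier A" if "p \<in> carrier P" for p
    unfolding f_def lin_def
    using e suppc fcR s1 that by (intro A.finsum_closed) (auto simp: Pi_def subset_iff)
  have fadd: "f (p \<oplus>\<^bsub>P\<^esub> q) = f p \<oplus>\<^bsub>A\<^esub> f q" if p: "p \<in> carrier P" and q: "q \<in> carrier P" for p q
  proof -
    let ?Y = "supp (s p) \<union> supp (s q) \<union> supp (s (p \<oplus>\<^bsub>P\<^esub> q))"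
    have sp: "s p \<in> free_carrier R P" "s q \<in> free_carrier R P" "s (p \<oplus>\<^bsub>P\<^esub> q) \<in> free_carrier R P"
      using s1 p q by auto
    have Y: "finite ?Y" "?Y \<subseteq> carrier P" using fin[OF sp(1)] fin[OF sp(2)] fin[OF sp(3)] suppc by auto
    have "f (p \<oplus>\<^bsub>P\<^esub> q) = (\<Oplus>\<^bsub>A\<^esub>z\<in>?Y. s (p \<oplus>\<^bsub>P\<^esub> q) z \<odot>\<^bsub>A\<^esub> e z)"
      unfolding f_def using ext[OF sp(3) Y(1) _ Y(2)] by blast
    also have "\<dots> = (\<Oplus>\<^bsub>A\<^esub>z\<in>?Y. s p z \<odot>\<^bsub>A\<^esub> e z \<oplus>\<^bsub>A\<^esub> s q z \<odot>\<^bsub>A\<^esub> e z)"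
    proof (rule A.finsum_cong')
      show "?Y = ?Y" ..
      show "(\<lambda>z. s p z \<odot>\<^bsub>A\<^esub> e z \<oplus>\<^bsub>A\<^esub> s q z \<odot>\<^bsub>A\<^esub> e z) \<in> ?Y \<rightarrow> carrier A"
        using Y(2) e fcR[OF sp(1)] fcR[OF sp(2)] by (auto simp: Pi_def subset_iff)
      show "s (p \<oplus>\<^bsub>P\<^esub> q) z \<odot>\<^bsub>A\<^esub> e z = s p z \<odot>\<^bsub>A\<^esub> e z \<oplus>\<^bsub>A\<^esub> s q z \<odot>\<^bsub>A\<^esub> e z"
        if "z \<in> ?Y" for z
        using that Y(2) e[of z] fcR[OF sp(1)] fcR[OF sp(2)] s2 p q
        by (auto simp: A.smult_l_distr)
    qed
    also have "\<dots> = (\<Oplus>\<^bsub>A\<^esub>z\<in>?Y. s p z \<odot>\<^bsub>A\<^esub> e z) \<oplus>\<^bsub>A\<^esub> (\<Oplus>\<^bsub>A\<^esub>z\<in>?Y. s q z \<odot>\<^bsub>A\<^esub> e z)"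
      using Y(2) e fcR[OF sp(1)] fcR[OF sp(2)] by (intro A.finsum_addf) (auto simp: Pi_def subset_iff)
    also have "\<dots> = f p \<oplus>\<^bsub>A\<^esub> f q"
    proof -
      have "lin (s p) = (\<Oplus>\<^bsub>A\<^esub>z\<in>?Y. s p z \<odot>\<^bsub>A\<^esub> e z)"
        by (rule ext[OF sp(1) Y(1) _ Y(2)]) blast
      moreover have "lin (s q) = (\<Oplus>\<^bsub>A\<^esub>z\<in>?Y. s q z \<odot>\<^bsub>A\<^esub> e z)"
        by (rule ext[OF sp(2) Y(1) _ Y(2)]) blast
      ultimately show ?thesis unfolding f_def by simp
    qed
    finally show ?thesis .
  qed
  have fsm: "f (a \<odot>\<^bsub>P\<^esub> p) = a \<odot>\<^bsub>A\<^esub> f p" if a: "a \<in> carrier R" and p: "p \<in> carrier P" for a p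
  proof -
    let ?Y = "supp (s p) \<union> supp (s (a \<odot>\<^bsub>P\<^esub> p))"
    have sp: "s p \<in> free_carrier R P" "s (a \<odot>\<^bsub>P\<^esub> p) \<in> free_carrier R P"
      using s1 p a by auto
    have Y: "finite ?Y" "?Y \<subseteq> carrier P" using fin[OF sp(1)] fin[OF sp(2)] suppc by auto
    have "f (a \<odot>\<^bsub>P\<^esub> p) = (\<Oplus>\<^bsub>A\<^esub>z\<in>?Y. s (a \<odot>\<^bsub>P\<^esub> p) z \<odot>\<^bsub>A\<^esub> e z)"
      unfolding f_def using ext[OF sp(2) Y(1) _ Y(2)] by blast
    also have "\<dots> = (\<Oplus>\<^bsub>A\<^esub>z\<in>?Y. a \<odot>\<^bsub>A\<^esub> (s p z \<odot>\<^bsub>A\<^esub> e z))"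
    proof (rule A.finsum_cong')
      show "?Y = ?Y" ..
      show "(\<lambda>z. a \<odot>\<^bsub>A\<^esub> (s p z \<odot>\<^bsub>A\<^esub> e z)) \<in> ?Y \<rightarrow> carrier A"
        using Y(2) e fcR[OF sp(1)] a by (auto simp: Pi_def subset_iff)
      show "s (a \<odot>\<^bsub>P\<^esub> p) z \<odot>\<^bsub>A\<^esub> e z = a \<odot>\<^bsub>A\<^esub> (s p z \<odot>\<^bsub>A\<^esub> e z)"
        if "z \<in> ?Y" for z
        using that Y(2) e[of z] fcR[OF sp(1)] s3 p a
        by (auto simp: A.smult_assoc1)
    qed
    also have "\<dots> = a \<odot>\<^bsub>A\<^esub> (\<Oplus>\<^bsub>A\<^esub>z\<in>?Y. s p z \<odot>\<^bsub>A\<^esub> e z)"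
      using Y e fcR[OF sp(1)] a by (intro A.finsum_smult_ldistr[symmetric]) (auto simp: Pi_def subset_iff)
    also have "\<dots> = a \<odot>\<^bsub>A\<^esub> f p"
    proof -
      have "lin (s p) = (\<Oplus>\<^bsub>A\<^esub>z\<in>?Y. s p z \<odot>\<^bsub>A\<^esub> e z)"
        by (rule ext[OF sp(1) Y(1) _ Y(2)]) blast
      then show ?thesis unfolding f_def by simp
    qed
    finally show ?thesis .
  qed
  have hf: "h (f p) = g p" if p: "p \<in> carrier P" for p
  proof -
    have sp: "s p \<in> free_carrier R P" using s1 p by auto
    have "h (f p) = (\<Oplus>\<^bsub>B\<^esub>q\<in>supp (s p). h (s p q \<odot>\<^bsub>A\<^esub> e q))"
      unfolding f_def lin_def
      using fin[OF sp] suppc e fcR[OF sp]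
      by (intro hom_finsum[OF A B h]) (auto simp: Pi_def subset_iff)
    also have "\<dots> = (\<Oplus>\<^bsub>B\<^esub>q\<in>supp (s p). g (s p q \<odot>\<^bsub>P\<^esub> q))"
    proof (rule B.finsum_cong')
      show "supp (s p) = supp (s p)" ..
      show "(\<lambda>q. g (s p q \<odot>\<^bsub>P\<^esub> q)) \<in> supp (s p) \<rightarrow> carrier B"
        using suppc fcR[OF sp] hom_basic(1)[OF MP B g] by (auto simp: Pi_def subset_iff)
      show "h (s p q \<odot>\<^bsub>A\<^esub> e q) = g (s p q \<odot>\<^bsub>P\<^esub> q)" if "q \<in> supp (s p)" for q
        using that suppc e[of q] fcR[OF sp] hom_basic(3)[OF A B h] hom_basic(3)[OF MP B g]
        by (auto simp: subset_iff)
    qed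
    also have "\<dots> = g (\<Oplus>\<^bsub>P\<^esub>q\<in>supp (s p). s p q \<odot>\<^bsub>P\<^esub> q)"
      using fin[OF sp] suppc fcR[OF sp]
      by (intro hom_finsum[OF MP B g, symmetric]) (auto simp: Pi_def subset_iff)
    also have "\<dots> = g p" using s1 p unfolding free_eps_def supp_def by auto
    finally show ?thesis .
  qed
  have "mod_hom R P A f" unfolding mod_hom_def using fcar fadd fsm by auto
  then show ?thesis using hf by blast
qed




lemma ker_sub_rad:
  fixes R :: "('r, 'x) ring_scheme" and P :: "('r, 'p) module" and N :: "('r, 'n) module"
  assumes N: "module R N" and pc: "proj_cover R N P \<pi>"
  shows "{x \<in> carrier P. \<pi> x = \<zero>\<^bsub>N\<^esub>} \<subseteq> ideal_mod (jacobson R) P"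
proof
  have PP: "projective R P" and pi: "mod_hom R P N \<pi>"
    and sup: "\<And>L. submodule L R P \<Longrightarrow>
          ({x \<in> carrier P. \<pi> x = \<zero>\<^bsub>N\<^esub>} <+>\<^bsub>P\<^esub> L) = carrier P \<Longrightarrow> L = carrier P"
    using pc unfolding proj_cover_def by auto
  have MP: "module R P" using PP unfolding projective_def by blast
  interpret P: pmod R P unfolding pmod_def by (rule MP)
  interpret N: module R N by fact
  note pb = hom_basic[OF MP N pi]
  obtain s where s1: "\<forall>p\<in>carrier P. s p \<in> free_carrier R P \<and> free_eps R P (s p) = p"
    and s2: "\<forall>p\<in>carrier P. \<forall>q\<in>carrier P. s (p \<oplus>\<^bsub>P\<^esub> q) = (\<lambda>z. s p z \<oplus>\<^bsub>R\<^esub> s q z)"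
    and s3: "\<forall>a\<in>carrier R. \<forall>p\<in>carrier P. s (a \<odot>\<^bsub>P\<^esub> p) = (\<lambda>z. a \<otimes>\<^bsub>R\<^esub> s p z)"
    using PP unfolding projective_def by blast
  have fcR: "s p q \<in> carrier R" if "p \<in> carrier P" for p q
    using that s1 unfolding free_carrier_def by blast
  have Jc: "jacobson R \<subseteq> carrier R" unfolding jacobson_def by blast
  fix x assume "x \<in> {x \<in> carrier P. \<pi> x = \<zero>\<^bsub>N\<^esub>}"
  then have x: "x \<in> carrier P" "\<pi> x = \<zero>\<^bsub>N\<^esub>" by auto
  have sx: "s x \<in> free_carrier R P" "free_eps R P (s x) = x" using s1 x by auto
  show "x \<in> ideal_mod (jacobson R) P"
  proof (cases "\<forall>q\<in>carrier P. s x q \<noteq> \<zero>\<^bsub>R\<^esub> \<longrightarrow> s x q \<in> jacobson R")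
    case True
    let ?Y = "{q \<in> carrier P. s x q \<noteq> \<zero>\<^bsub>R\<^esub>}"
    have "finite {q. s x q \<noteq> \<zero>\<^bsub>R\<^esub>}" using sx unfolding free_carrier_def by blast
    then have fY: "finite ?Y" by (rule rev_finite_subset) blast
    have "(\<Oplus>\<^bsub>P\<^esub>q\<in>?Y. s x q \<odot>\<^bsub>P\<^esub> q) \<in> ideal_mod (jacobson R) P"
      using True by (intro P.ideal_mod_finsum[OF Jc fY]) auto
    then show ?thesis using sx(2) unfolding free_eps_def by simp
  next
    case False
    then obtain q0 where q0: "q0 \<in> carrier P" "s x q0 \<notin> jacobson R" by blast
    then obtain m where m: "maximalideal m R" "s x q0 \<notin> m"
      using fcR[OF x(1)] unfolding jacobson_def by blast
    interpret m: maximalideal m R by fact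
    define L where "L = {p \<in> carrier P. s p q0 \<in> m}"
    have s0: "s \<zero>\<^bsub>P\<^esub> q0 = \<zero>\<^bsub>R\<^esub>"
    proof -
      have "s \<zero>\<^bsub>P\<^esub> = s (\<zero>\<^bsub>R\<^esub> \<odot>\<^bsub>P\<^esub> \<zero>\<^bsub>P\<^esub>)" by simp
      also have "\<dots> = (\<lambda>z. \<zero>\<^bsub>R\<^esub> \<otimes>\<^bsub>R\<^esub> s \<zero>\<^bsub>P\<^esub> z)" by (rule s3[rule_format]) auto
      finally have "s \<zero>\<^bsub>P\<^esub> q0 = \<zero>\<^bsub>R\<^esub> \<otimes>\<^bsub>R\<^esub> s \<zero>\<^bsub>P\<^esub> q0" by (rule fun_cong)
      then show ?thesis using fcR[of "\<zero>\<^bsub>P\<^esub>" q0] by simp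
    qed
    have sneg: "s (\<ominus>\<^bsub>P\<^esub> p) q0 = \<ominus>\<^bsub>R\<^esub> s p q0" if p: "p \<in> carrier P" for p
    proof -
      have "\<ominus>\<^bsub>P\<^esub> p = (\<ominus>\<^bsub>R\<^esub> \<one>\<^bsub>R\<^esub>) \<odot>\<^bsub>P\<^esub> p" using p by (simp add: P.smult_l_minus)
      then have "s (\<ominus>\<^bsub>P\<^esub> p) q0 = (\<ominus>\<^bsub>R\<^esub> \<one>\<^bsub>R\<^esub>) \<otimes>\<^bsub>R\<^esub> s p q0" using s3 p by simp
      then show ?thesis using fcR[OF p] by (simp add: P.R.l_minus)
    qed
    have Lsub: "submodule L R P"
    proof (rule P.submoduleI)
      show "L \<subseteq> carrier P" unfolding L_def by blast
      show "\<zero>\<^bsub>P\<^esub> \<in> L" unfolding L_def using s0 by simp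
      show "\<ominus>\<^bsub>P\<^esub> a \<in> L" if "a \<in> L" for a
        using that sneg unfolding L_def by (auto intro: m.a_inv_closed)
      show "a \<oplus>\<^bsub>P\<^esub> b \<in> L" if "a \<in> L" "b \<in> L" for a b
        using that s2 unfolding L_def by (auto intro: m.a_closed)
      show "a \<odot>\<^bsub>P\<^esub> b \<in> L" if "a \<in> carrier R" "b \<in> L" for a b
        using that s3 unfolding L_def by (auto intro: m.I_l_closed)
    qed
    have "{x \<in> carrier P. \<pi> x = \<zero>\<^bsub>N\<^esub>} <+>\<^bsub>P\<^esub> L = carrier P"
    proof
      show "{x \<in> carrier P. \<pi> x = \<zero>\<^bsub>N\<^esub>} <+>\<^bsub>P\<^esub> L \<subseteq> carrier P"
      proof
        fix y assume "y \<in> {x \<in> carrier P. \<pi> x = \<zero>\<^bsub>N\<^esub>} <+>\<^bsub>P\<^esub> L"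
        then obtain a b where "a \<in> carrier P" "b \<in> carrier P" "y = a \<oplus>\<^bsub>P\<^esub> b"
          unfolding set_add_iff L_def by blast
        then show "y \<in> carrier P" by simp
      qed
      show "carrier P \<subseteq> {x \<in> carrier P. \<pi> x = \<zero>\<^bsub>N\<^esub>} <+>\<^bsub>P\<^esub> L"
      proof
        fix p assume p: "p \<in> carrier P"
        obtain c where c: "c \<in> carrier R" "s p q0 \<ominus>\<^bsub>R\<^esub> c \<otimes>\<^bsub>R\<^esub> s x q0 \<in> m"
          using P.R.maximal_solve[OF m(1) fcR[OF x(1)] m(2) fcR[OF p]] by blast
        have cx: "c \<odot>\<^bsub>P\<^esub> x \<in> carrier P" using c x by simp
        have k: "\<pi> (c \<odot>\<^bsub>P\<^esub> x) = \<zero>\<^bsub>N\<^esub>" using pb(3)[OF c(1) x(1)] x(2) c by simp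
        have "s (p \<oplus>\<^bsub>P\<^esub> \<ominus>\<^bsub>P\<^esub> (c \<odot>\<^bsub>P\<^esub> x)) q0 = s p q0 \<oplus>\<^bsub>R\<^esub> \<ominus>\<^bsub>R\<^esub> (c \<otimes>\<^bsub>R\<^esub> s x q0)"
          using s2 p cx sneg[OF cx] s3 c x by simp
        then have l: "p \<oplus>\<^bsub>P\<^esub> \<ominus>\<^bsub>P\<^esub> (c \<odot>\<^bsub>P\<^esub> x) \<in> L"
          using c p cx unfolding L_def by (simp add: a_minus_def)
        have "p = c \<odot>\<^bsub>P\<^esub> x \<oplus>\<^bsub>P\<^esub> (p \<oplus>\<^bsub>P\<^esub> \<ominus>\<^bsub>P\<^esub> (c \<odot>\<^bsub>P\<^esub> x))"
          using p cx by (simp add: P.a_comm P.a_assoc P.r_neg P.add.m_lcomm)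
        then show "p \<in> {x \<in> carrier P. \<pi> x = \<zero>\<^bsub>N\<^esub>} <+>\<^bsub>P\<^esub> L"
          unfolding set_add_iff using k cx l by blast
      qed
    qed
    then have "L = carrier P" using sup[OF Lsub] by blast
    then show ?thesis using x(1) m(2) unfolding L_def by blast
  qed
qed




lemma (in cring) jacobson_ideal: "ideal (jacobson R) R"
proof (cases "{J. maximalideal J R} = {}")
  case True
  then show ?thesis unfolding jacobson_def using oneideal by simp
next
  case False
  have "jacobson R = \<Inter>{J. maximalideal J R}"
  proof -
    have "J \<subseteq> carrier R" if "maximalideal J R" for J
      using that by (simp add: maximalideal.axioms(1) ideal.axioms(1) additive_subgroup.a_subset)
    then show ?thesis unfolding jacobson_def using False by blast
  qed
  moreover have "ideal (\<Inter>{J. maximalideal J R}) R"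
    using False by (intro i_Intersect) (auto intro: maximalideal.axioms(1))
  ultimately show ?thesis by simp
qed

lemma hom_image_sub:
  assumes A: "module R A" and B: "module R B" and h: "mod_hom R A B h"
  shows "submodule (h ` carrier A) R B"
proof -
  interpret A: module R A by fact
  interpret B: module R B by fact
  note hb = hom_basic[OF A B h]
  show ?thesis
  proof (rule B.submoduleI)
    show "h ` carrier A \<subseteq> carrier B" using hb(1) by blast
    have "h \<zero>\<^bsub>A\<^esub> \<in> h ` carrier A" by simp
    then show "\<zero>\<^bsub>B\<^esub> \<in> h ` carrier A" using hb(4) by simp
    show "\<ominus>\<^bsub>B\<^esub> a \<in> h ` carrier A" if ha: "a \<in> h ` carrier A" for a
    proof -
      obtain y where y: "y \<in> carrier A" "a = h y" using ha by blast
      then have "\<ominus>\<^bsub>B\<^esub> a = h (\<ominus>\<^bsub>A\<^esub> y)" using hb(5) by simp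
      then show ?thesis using y by simp
    qed
    show "a \<oplus>\<^bsub>B\<^esub> b \<in> h ` carrier A" if ha: "a \<in> h ` carrier A" and hb': "b \<in> h ` carrier A" for a b
    proof -
      obtain y where y: "y \<in> carrier A" "a = h y" using ha by blast
      obtain z where z: "z \<in> carrier A" "b = h z" using hb' by blast
      have "a \<oplus>\<^bsub>B\<^esub> b = h (y \<oplus>\<^bsub>A\<^esub> z)" using hb(2) y z by simp
      then show ?thesis using y z by simp
    qed
    show "c \<odot>\<^bsub>B\<^esub> x \<in> h ` carrier A" if hc: "c \<in> carrier R" and hx: "x \<in> h ` carrier A" for c x
    proof -
      obtain y where y: "y \<in> carrier A" "x = h y" using hx by blast
      have "c \<odot>\<^bsub>B\<^esub> x = h (c \<odot>\<^bsub>A\<^esub> y)" using hb(3) y hc by simp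
      then show ?thesis using y hc by simp
    qed
  qed
qed

lemma id_hom: "module R A \<Longrightarrow> mod_hom R A A id"
  unfolding mod_hom_def by auto




theorem generic:
  fixes R :: "('r, 'x) ring_scheme" and P :: "('r, 'p) module" and N :: "('r, 'n) module"
  assumes N: "module R N" and pc: "proj_cover R N P \<pi>"
    and ann: "\<forall>a\<in>jacobson R. \<forall>U\<in>carrier N. a \<odot>\<^bsub>N\<^esub> U = \<zero>\<^bsub>N\<^esub>"
    and T: "mod_hom R N N T" and Tsurj: "T ` carrier N = carrier N" and Tinj: "inj_on T (carrier N)"
  shows "\<exists>t \<phi>. mod_iso R P P t \<and>
            mod_iso R (quot P (carrier P) (ideal_mod (jacobson R) P)) N \<phi> \<and>
            (\<forall>U\<in>carrier (quot P (carrier P) (ideal_mod (jacobson R) P)).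
               \<phi> (quot_map P (ideal_mod (jacobson R) P) t U) = T (\<phi> U))"
proof -
  have PP: "projective R P" and pi: "mod_hom R P N \<pi>" and pisurj: "\<pi> ` carrier P = carrier N"
    and sup: "\<And>L. submodule L R P \<Longrightarrow>
          ({x \<in> carrier P. \<pi> x = \<zero>\<^bsub>N\<^esub>} <+>\<^bsub>P\<^esub> L) = carrier P \<Longrightarrow> L = carrier P"
    using pc unfolding proj_cover_def by auto
  have MP: "module R P" using PP unfolding projective_def by blast
  interpret P: pmod R P unfolding pmod_def by (rule MP)
  interpret N: module R N by fact
  note pb = hom_basic[OF MP N pi]
  note Tb = hom_basic[OF N N T]
  define J where "J = jacobson R"
  define IP where "IP = ideal_mod J P"
  define K where "K = {x \<in> carrier P. \<pi> x = \<zero>\<^bsub>N\<^esub>}"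
  have Jid: "ideal J R" unfolding J_def by (rule P.R.jacobson_ideal)
  have Jc: "J \<subseteq> carrier R" unfolding J_def jacobson_def by blast
  have IPsub: "submodule IP R P" unfolding IP_def by (rule P.ideal_mod_sub[OF Jid])
  note ips = P.subE[OF IPsub]
  have KIP: "K = IP"
  proof
    show "K \<subseteq> IP" unfolding K_def IP_def J_def by (rule ker_sub_rad[OF N pc])
    show "IP \<subseteq> K"
    proof
      fix x assume "x \<in> IP"
      then show "x \<in> K" unfolding IP_def
      proof (induct x rule: ideal_mod.induct)
        case zero then show ?case unfolding K_def using pb(4) by simp
      next
        case (step z a m)
        have a: "a \<in> carrier R" using step Jc by auto
        have "\<pi> (a \<odot>\<^bsub>P\<^esub> m) = \<zero>\<^bsub>N\<^esub>" using pb(3)[OF a step(4)] ann step(3) pb(1)[OF step(4)]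
          unfolding J_def by simp
        then show ?case using step pb(2)[of z "a \<odot>\<^bsub>P\<^esub> m"] a unfolding K_def by simp
      qed
    qed
  qed
  have Ksub: "submodule K R P" using KIP IPsub by simp
  have T0: "U = \<zero>\<^bsub>N\<^esub>" if "T U = \<zero>\<^bsub>N\<^esub>" "U \<in> carrier N" for U
    using inj_onD[OF Tinj, of U "\<zero>\<^bsub>N\<^esub>"] that Tb(4) by simp
  have g: "mod_hom R P N (\<lambda>p. T (\<pi> p))"
    unfolding mod_hom_def using pb Tb by auto
  have gs: "\<forall>p\<in>carrier P. \<exists>a\<in>carrier P. \<pi> a = T (\<pi> p)"
  proof
    fix p assume "p \<in> carrier P"
    then have "T (\<pi> p) \<in> \<pi> ` carrier P" using pisurj pb(1) Tb(1) by simp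
    then obtain a where "T (\<pi> p) = \<pi> a" "a \<in> carrier P" by (rule imageE)
    then show "\<exists>a\<in>carrier P. \<pi> a = T (\<pi> p)" by (intro bexI[of _ a]) simp_all
  qed
  obtain t where t: "mod_hom R P P t" and tpi: "\<And>p. p \<in> carrier P \<Longrightarrow> \<pi> (t p) = T (\<pi> p)"
    using lift[OF PP MP N g pi gs] by blast
  note tb = hom_basic[OF MP MP t]
  have tK: "t k \<in> K" if "k \<in> K" for k
    using that tpi tb(1) Tb(4) unfolding K_def by auto
  have tsurj: "t ` carrier P = carrier P"
  proof (rule sup[OF hom_image_sub[OF MP MP t], folded K_def])
    show "K <+>\<^bsub>P\<^esub> t ` carrier P = carrier P"
    proof
      show "K <+>\<^bsub>P\<^esub> t ` carrier P \<subseteq> carrier P"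
      proof
        fix y assume "y \<in> K <+>\<^bsub>P\<^esub> t ` carrier P"
        then obtain a b where ab: "a \<in> K" "b \<in> carrier P" "y = a \<oplus>\<^bsub>P\<^esub> t b"
          unfolding set_add_iff by blast
        have "a \<in> carrier P" using ab(1) unfolding K_def by simp
        then show "y \<in> carrier P" using ab tb(1) by simp
      qed
      show "carrier P \<subseteq> K <+>\<^bsub>P\<^esub> t ` carrier P"
      proof
        fix p assume p: "p \<in> carrier P"
        have "\<pi> p \<in> T ` carrier N" using Tsurj pb(1)[OF p] by simp
        then obtain V where V0: "\<pi> p = T V" "V \<in> carrier N" by (rule imageE)
        then have V: "V \<in> carrier N" "T V = \<pi> p" by simp_all
        have "V \<in> \<pi> ` carrier P" using pisurj V(1) by simp
        then obtain p2 where p20: "V = \<pi> p2" "p2 \<in> carrier P" by (rule imageE)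
        then have p2: "p2 \<in> carrier P" "\<pi> p2 = V" by simp_all
        have tp2: "t p2 \<in> carrier P" "\<pi> (t p2) = \<pi> p" using tb(1) p2 tpi V by auto
        have "\<pi> (p \<ominus>\<^bsub>P\<^esub> t p2) = \<zero>\<^bsub>N\<^esub>" using pb(6)[OF p tp2(1)] tp2(2) pb(1)[OF p]
          by (simp add: N.r_neg a_minus_def)
        then have a: "p \<ominus>\<^bsub>P\<^esub> t p2 \<in> K" unfolding K_def using p tp2 by simp
        have eq: "p = (p \<ominus>\<^bsub>P\<^esub> t p2) \<oplus>\<^bsub>P\<^esub> t p2" using p tp2(1)
          by (simp add: a_minus_def P.a_assoc P.l_neg)
        have b: "t p2 \<in> t ` carrier P" using p2(1) by (rule imageI)
        show "p \<in> K <+>\<^bsub>P\<^esub> t ` carrier P"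
          unfolding set_add_iff
          by (rule bexI[where P="\<lambda>a. \<exists>b\<in>t ` carrier P. p = a \<oplus>\<^bsub>P\<^esub> b", OF bexI[where P="\<lambda>b. p = (p \<ominus>\<^bsub>P\<^esub> t p2) \<oplus>\<^bsub>P\<^esub> b", OF eq b] a])
      qed
    qed
  qed
  have ts: "\<forall>p\<in>carrier P. \<exists>a\<in>carrier P. t a = id p"
  proof
    fix p assume "p \<in> carrier P"
    then have "p \<in> t ` carrier P" using tsurj by simp
    then obtain a where "p = t a" "a \<in> carrier P" by (rule imageE)
    then show "\<exists>a\<in>carrier P. t a = id p" by (intro bexI[of _ a]) simp_all
  qed
  obtain \<sigma> where sg: "mod_hom R P P \<sigma>" and tsg: "\<And>p. p \<in> carrier P \<Longrightarrow> t (\<sigma> p) = id p"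
    using lift[OF PP MP MP id_hom[OF MP] t ts] by blast
  note sb = hom_basic[OF MP MP sg]
  have ssurj: "\<sigma> ` carrier P = carrier P"
  proof (rule sup[OF hom_image_sub[OF MP MP sg], folded K_def])
    show "K <+>\<^bsub>P\<^esub> \<sigma> ` carrier P = carrier P"
    proof
      show "K <+>\<^bsub>P\<^esub> \<sigma> ` carrier P \<subseteq> carrier P"
      proof
        fix y assume "y \<in> K <+>\<^bsub>P\<^esub> \<sigma> ` carrier P"
        then obtain a b where ab: "a \<in> K" "b \<in> carrier P" "y = a \<oplus>\<^bsub>P\<^esub> \<sigma> b"
          unfolding set_add_iff by blast
        have "a \<in> carrier P" using ab(1) unfolding K_def by simp
        then show "y \<in> carrier P" using ab sb(1) by simp
      qed
      show "carrier P \<subseteq> K <+>\<^bsub>P\<^esub> \<sigma> ` carrier P"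
      proof
        fix p assume p: "p \<in> carrier P"
        have q: "\<sigma> (t p) \<in> carrier P" "t (\<sigma> (t p)) = t p" using sb(1) tb(1) tsg p by auto
        have "t (p \<ominus>\<^bsub>P\<^esub> \<sigma> (t p)) = \<zero>\<^bsub>P\<^esub>" using tb(6)[OF p q(1)] q(2) tb(1)[OF p]
          by (simp add: P.r_neg a_minus_def)
        then have "T (\<pi> (p \<ominus>\<^bsub>P\<^esub> \<sigma> (t p))) = \<zero>\<^bsub>N\<^esub>"
          using tpi[of "p \<ominus>\<^bsub>P\<^esub> \<sigma> (t p)"] p q pb(4) by simp
        then have "\<pi> (p \<ominus>\<^bsub>P\<^esub> \<sigma> (t p)) = \<zero>\<^bsub>N\<^esub>" using T0 pb(1) p q by simp
        then have a: "p \<ominus>\<^bsub>P\<^esub> \<sigma> (t p) \<in> K" unfolding K_def using p q by simp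
        have eq: "p = (p \<ominus>\<^bsub>P\<^esub> \<sigma> (t p)) \<oplus>\<^bsub>P\<^esub> \<sigma> (t p)" using p q(1)
          by (simp add: a_minus_def P.a_assoc P.l_neg)
        have b: "\<sigma> (t p) \<in> \<sigma> ` carrier P" using tb(1)[OF p] by (rule imageI)
        show "p \<in> K <+>\<^bsub>P\<^esub> \<sigma> ` carrier P"
          unfolding set_add_iff
          by (rule bexI[where P="\<lambda>a. \<exists>b\<in>\<sigma> ` carrier P. p = a \<oplus>\<^bsub>P\<^esub> b", OF bexI[where P="\<lambda>b. p = (p \<ominus>\<^bsub>P\<^esub> \<sigma> (t p)) \<oplus>\<^bsub>P\<^esub> b", OF eq b] a])
      qed
    qed
  qed
  have tinj: "inj_on t (carrier P)"
  proof (rule inj_onI)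
    fix p1 p2 assume p: "p1 \<in> carrier P" "p2 \<in> carrier P" "t p1 = t p2"
    have "p1 \<in> \<sigma> ` carrier P" "p2 \<in> \<sigma> ` carrier P" using ssurj p(1,2) by simp_all
    then obtain q1 q2 where q1': "p1 = \<sigma> q1" "q1 \<in> carrier P" and q2': "p2 = \<sigma> q2" "q2 \<in> carrier P"
      by (elim imageE)
    then have q1: "q1 \<in> carrier P" "p1 = \<sigma> q1" and q2: "q2 \<in> carrier P" "p2 = \<sigma> q2" by simp_all
    have "q1 = t p1" "q2 = t p2" using tsg q1 q2 by auto
    then show "p1 = p2" using q1 q2 p(3) by simp
  qed
  have tiso: "mod_iso R P P t" unfolding mod_iso_def bij_betw_def using t tinj tsurj by blast
  define Q where "Q = quot P (carrier P) IP"
  define \<phi> where "\<phi> U = \<pi> (SOME x. x \<in> U)" for U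
  have cosQ: "carrier Q = {IP +>\<^bsub>P\<^esub> x | x. x \<in> carrier P}" unfolding Q_def by (simp add: quot_simps)
  have repQ: "\<exists>x\<in>carrier P. U = IP +>\<^bsub>P\<^esub> x" if U: "U \<in> carrier Q" for U
  proof -
    have "U \<in> {IP +>\<^bsub>P\<^esub> x | x. x \<in> carrier P}" using U cosQ by simp
    then show ?thesis by blast
  qed
  have inQ: "IP +>\<^bsub>P\<^esub> x \<in> carrier Q" if "x \<in> carrier P" for x
    using that unfolding cosQ by blast
  have selfc: "x \<in> IP +>\<^bsub>P\<^esub> x" if x: "x \<in> carrier P" for x
  proof -
    have "x = \<zero>\<^bsub>P\<^esub> \<oplus>\<^bsub>P\<^esub> x" using x by simp
    then show ?thesis unfolding rcos_iff using ips(2) by blast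
  qed
  have phi: "\<phi> (IP +>\<^bsub>P\<^esub> x) = \<pi> x" if x: "x \<in> carrier P" for x
  proof -
    have "(SOME y. y \<in> IP +>\<^bsub>P\<^esub> x) \<in> IP +>\<^bsub>P\<^esub> x" using selfc[OF x] by (rule someI)
    then obtain h where h: "h \<in> IP" "(SOME y. y \<in> IP +>\<^bsub>P\<^esub> x) = h \<oplus>\<^bsub>P\<^esub> x"
      unfolding rcos_iff by blast
    have hc: "h \<in> carrier P" using h(1) ips(1) by auto
    have "\<pi> h = \<zero>\<^bsub>N\<^esub>" using h(1) KIP unfolding K_def by auto
    then show ?thesis unfolding \<phi>_def using h(2) hc x pb(2) pb(1) by simp
  qed
  have Qadd: "(IP +>\<^bsub>P\<^esub> x) \<oplus>\<^bsub>Q\<^esub> (IP +>\<^bsub>P\<^esub> y) = IP +>\<^bsub>P\<^esub> (x \<oplus>\<^bsub>P\<^esub> y)"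
    if "x \<in> carrier P" "y \<in> carrier P" for x y
    unfolding Q_def quot_simps using P.coset_sum[OF IPsub that] .
  have Qsm: "a \<odot>\<^bsub>Q\<^esub> (IP +>\<^bsub>P\<^esub> x) = IP +>\<^bsub>P\<^esub> (a \<odot>\<^bsub>P\<^esub> x)"
    if "a \<in> carrier R" "x \<in> carrier P" for a x
    unfolding Q_def quot_simps using P.coset_smult[OF IPsub that] .
  have phihom: "mod_hom R Q N \<phi>"
    unfolding mod_hom_def
  proof (intro conjI ballI)
    show "\<phi> \<in> carrier Q \<rightarrow> carrier N"
    proof
      fix U assume "U \<in> carrier Q"
      then obtain x where "x \<in> carrier P" "U = IP +>\<^bsub>P\<^esub> x" using repQ by blast
      then show "\<phi> U \<in> carrier N" using phi pb(1) by simp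
    qed
    fix U V assume "U \<in> carrier Q" "V \<in> carrier Q"
    then obtain x y where "x \<in> carrier P" "U = IP +>\<^bsub>P\<^esub> x" "y \<in> carrier P" "V = IP +>\<^bsub>P\<^esub> y"
      using repQ by meson
    then show "\<phi> (U \<oplus>\<^bsub>Q\<^esub> V) = \<phi> U \<oplus>\<^bsub>N\<^esub> \<phi> V" using Qadd phi pb(2) by simp
  next
    fix a U assume a: "a \<in> carrier R" and "U \<in> carrier Q"
    then obtain x where "x \<in> carrier P" "U = IP +>\<^bsub>P\<^esub> x" using repQ by blast
    then show "\<phi> (a \<odot>\<^bsub>Q\<^esub> U) = a \<odot>\<^bsub>N\<^esub> \<phi> U" using Qsm a phi pb(3) by simp
  qed
  have phiinj: "inj_on \<phi> (carrier Q)"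
  proof (rule inj_onI)
    fix U V assume "U \<in> carrier Q" "V \<in> carrier Q" and eq: "\<phi> U = \<phi> V"
    then obtain x y where xy: "x \<in> carrier P" "U = IP +>\<^bsub>P\<^esub> x" "y \<in> carrier P" "V = IP +>\<^bsub>P\<^esub> y"
      using repQ by meson
    then have "\<pi> x = \<pi> y" using eq phi by simp
    then have "\<pi> (x \<ominus>\<^bsub>P\<^esub> y) = \<zero>\<^bsub>N\<^esub>" using pb(6) xy pb(1) by (simp add: a_minus_def N.r_neg)
    then have "x \<ominus>\<^bsub>P\<^esub> y \<in> IP" using KIP xy unfolding K_def by auto
    then show "U = V" using P.coset_eq[OF IPsub] xy by simp
  qed
  have phisurj: "\<phi> ` carrier Q = carrier N"
  proof
    show "\<phi> ` carrier Q \<subseteq> carrier N"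
    proof
      fix n assume "n \<in> \<phi> ` carrier Q"
      then obtain U where "n = \<phi> U" "U \<in> carrier Q" by (rule imageE)
      moreover obtain x where "x \<in> carrier P" "U = IP +>\<^bsub>P\<^esub> x" using repQ calculation(2) by blast
      ultimately show "n \<in> carrier N" using phi pb(1) by simp
    qed
    show "carrier N \<subseteq> \<phi> ` carrier Q"
    proof
      fix n assume "n \<in> carrier N"
      then have "n \<in> \<pi> ` carrier P" using pisurj by simp
      then obtain x where x': "n = \<pi> x" "x \<in> carrier P" by (rule imageE)
      then have x: "x \<in> carrier P" "n = \<pi> x" by simp_all
      then have "IP +>\<^bsub>P\<^esub> x \<in> carrier Q" using inQ by blast
      moreover have "n = \<phi> (IP +>\<^bsub>P\<^esub> x)" using phi x by simp
      ultimately show "n \<in> \<phi> ` carrier Q" by blast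
    qed
  qed
  have phiiso: "mod_iso R Q N \<phi>" unfolding mod_iso_def bij_betw_def using phihom phiinj phisurj by blast
  have compat: "\<phi> (quot_map P IP t U) = T (\<phi> U)" if U: "U \<in> carrier Q" for U
  proof -
    obtain x where x: "x \<in> carrier P" "U = IP +>\<^bsub>P\<^esub> x" using repQ U by blast
    have "z \<in> IP <+>\<^bsub>P\<^esub> t ` (IP +>\<^bsub>P\<^esub> x) \<longleftrightarrow> z \<in> IP +>\<^bsub>P\<^esub> t x" for z
    proof
      assume "z \<in> IP <+>\<^bsub>P\<^esub> t ` (IP +>\<^bsub>P\<^esub> x)"
      then obtain f g where fg: "f \<in> IP" "g \<in> IP" "z = f \<oplus>\<^bsub>P\<^esub> t (g \<oplus>\<^bsub>P\<^esub> x)"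
        unfolding set_add_iff a_r_coset_def' by blast
      have fc: "f \<in> carrier P" "g \<in> carrier P" using fg ips(1) by auto
      have "z = (f \<oplus>\<^bsub>P\<^esub> t g) \<oplus>\<^bsub>P\<^esub> t x"
        using fg(3) fc x tb(2) tb(1) by (simp add: P.a_assoc)
      moreover have "t g \<in> IP" using tK fg(2) KIP by auto
      then have "f \<oplus>\<^bsub>P\<^esub> t g \<in> IP" using ips(5) fg by blast
      ultimately show "z \<in> IP +>\<^bsub>P\<^esub> t x" unfolding rcos_iff by blast
    next
      assume "z \<in> IP +>\<^bsub>P\<^esub> t x"
      then obtain f where f: "f \<in> IP" "z = f \<oplus>\<^bsub>P\<^esub> t x" unfolding rcos_iff by blast
      then show "z \<in> IP <+>\<^bsub>P\<^esub> t ` (IP +>\<^bsub>P\<^esub> x)"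
        using selfc[OF x(1)] unfolding set_add_iff by blast
    qed
    then have "quot_map P IP t U = IP +>\<^bsub>P\<^esub> t x" unfolding quot_map_def x(2) by blast
    then show ?thesis using phi x tb(1) tpi by simp
  qed
  show ?thesis
    using tiso phiiso compat unfolding Q_def IP_def J_def by blast
qed




context lrel
begin

lemma modM: "module R M" by unfold_locales

lemma selfc: "submodule H R M \<Longrightarrow> x \<in> carrier M \<Longrightarrow> x \<in> H +>\<^bsub>M\<^esub> x"
proof -
  assume H: "submodule H R M" and x: "x \<in> carrier M"
  have "x = \<zero>\<^bsub>M\<^esub> \<oplus>\<^bsub>M\<^esub> x" using x by simp
  then show ?thesis unfolding rcos_iff using subE(2)[OF H] by blast
qed

lemma T_rep:
  assumes m: "m \<in> rel_sharp D" and mm: "(m, m') \<in> D" and m': "m' \<in> rel_sharp D"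
  shows "sharp_T M D (rel_flat M D +>\<^bsub>M\<^esub> m) = rel_flat M D +>\<^bsub>M\<^esub> m'"
  unfolding sharp_T_def
proof (rule the_equality)
  let ?F = "rel_flat M D" and ?S = "rel_sharp D"
  note f = subE[OF flat_sub] and s = subE[OF sharp_sub]
  have mc: "m \<in> carrier M" "m' \<in> carrier M" using D_car[OF mm] by auto
  show "\<exists>m0\<in>?F +>\<^bsub>M\<^esub> m. \<exists>m0'. m0' \<in> ?S \<inter> (?F <+>\<^bsub>M\<^esub> D `` {m0}) \<and>
          ?F +>\<^bsub>M\<^esub> m' = ?F +>\<^bsub>M\<^esub> m0'"
  proof (intro bexI exI conjI)
    show "m \<in> ?F +>\<^bsub>M\<^esub> m" using selfc[OF flat_sub mc(1)] .
    have "m' = \<zero>\<^bsub>M\<^esub> \<oplus>\<^bsub>M\<^esub> m'" using mc by simp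
    moreover have "m' \<in> D `` {m}" using mm by blast
    ultimately have "m' \<in> ?F <+>\<^bsub>M\<^esub> D `` {m}"
      unfolding set_add_iff
      by (intro bexI[where P="\<lambda>a. \<exists>b\<in>D `` {m}. m' = a \<oplus>\<^bsub>M\<^esub> b", OF bexI[where P="\<lambda>b. m' = \<zero>\<^bsub>M\<^esub> \<oplus>\<^bsub>M\<^esub> b"]] f(2))
    then show "m' \<in> ?S \<inter> (?F <+>\<^bsub>M\<^esub> D `` {m})" using m' by blast
  qed simp
  fix V assume "\<exists>m0\<in>?F +>\<^bsub>M\<^esub> m. \<exists>m0'. m0' \<in> ?S \<inter> (?F <+>\<^bsub>M\<^esub> D `` {m0}) \<and> V = ?F +>\<^bsub>M\<^esub> m0'"
  then obtain m0 m0' where m0: "m0 \<in> ?F +>\<^bsub>M\<^esub> m" "m0' \<in> ?S" "m0' \<in> ?F <+>\<^bsub>M\<^esub> D `` {m0}"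
    "V = ?F +>\<^bsub>M\<^esub> m0'" by blast
  obtain h where h: "h \<in> ?F" "m0 = h \<oplus>\<^bsub>M\<^esub> m" using m0(1) unfolding rcos_iff by blast
  obtain c z where cz: "c \<in> ?F" "(m0, z) \<in> D" "m0' = c \<oplus>\<^bsub>M\<^esub> z"
    using m0(3) unfolding set_add_iff by blast
  have hc: "h \<in> carrier M" "c \<in> carrier M" "z \<in> carrier M" using h cz f(1) D_car[OF cz(2)] by auto
  have "(m0 \<ominus>\<^bsub>M\<^esub> m, z \<ominus>\<^bsub>M\<^esub> m') \<in> D" using cz(2) mm by (rule D_diff)
  moreover have "m0 \<ominus>\<^bsub>M\<^esub> m = h" using h(2) hc mc by (simp add: a_minus_def a_assoc M.r_neg)
  ultimately have hz: "(h, z \<ominus>\<^bsub>M\<^esub> m') \<in> D" by simp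
  have "z = m0' \<ominus>\<^bsub>M\<^esub> c" using cz(3) hc
    by (simp add: a_minus_def a_comm[of c z] a_assoc M.r_neg)
  then have "z \<in> ?S" using m0(2) cz(1) flat_sub_sharp s(6) by auto
  then have "z \<ominus>\<^bsub>M\<^esub> m' \<in> ?S" using m' s(6) by blast
  then have "z \<ominus>\<^bsub>M\<^esub> m' \<in> ?F" using KL[OF h(1) hz] by blast
  then have "c \<oplus>\<^bsub>M\<^esub> (z \<ominus>\<^bsub>M\<^esub> m') \<in> ?F" using f(5) cz(1) by blast
  moreover have "c \<oplus>\<^bsub>M\<^esub> (z \<ominus>\<^bsub>M\<^esub> m') = m0' \<ominus>\<^bsub>M\<^esub> m'" using cz(3) hc mc
    by (simp add: a_minus_def a_assoc)
  ultimately have "m0' \<ominus>\<^bsub>M\<^esub> m' \<in> ?F" by simp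
  moreover have "m0' \<in> carrier M" using m0(2) s(1) by auto
  ultimately show "V = ?F +>\<^bsub>M\<^esub> m'" using m0(4) coset_eq[OF flat_sub _ mc(2)] by simp
qed

lemma T_props:
  defines "N \<equiv> quot M (rel_sharp D) (rel_flat M D)"
  shows "module R N" "mod_hom R N N (sharp_T M D)" "sharp_T M D ` carrier N = carrier N"
    "inj_on (sharp_T M D) (carrier N)"
proof -
  let ?F = "rel_flat M D" and ?S = "rel_sharp D" and ?T = "sharp_T M D"
  note f = subE[OF flat_sub] and s = subE[OF sharp_sub]
  interpret MM: pmod R M by unfold_locales
  show modN: "module R N" unfolding N_def
    by (rule MM.quot_module[OF sharp_sub flat_sub flat_sub_sharp])
  have carN: "carrier N = {?F +>\<^bsub>M\<^esub> x | x. x \<in> ?S}" unfolding N_def by (simp add: quot_simps)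
  have repN: "\<exists>x\<in>?S. U = ?F +>\<^bsub>M\<^esub> x" if "U \<in> carrier N" for U
  proof -
    have "U \<in> {?F +>\<^bsub>M\<^esub> x | x. x \<in> ?S}" using that carN by simp
    then show ?thesis by blast
  qed
  have inN: "?F +>\<^bsub>M\<^esub> x \<in> carrier N" if "x \<in> ?S" for x using that unfolding carN by blast
  have Nadd: "(?F +>\<^bsub>M\<^esub> x) \<oplus>\<^bsub>N\<^esub> (?F +>\<^bsub>M\<^esub> y) = ?F +>\<^bsub>M\<^esub> (x \<oplus>\<^bsub>M\<^esub> y)"
    if "x \<in> ?S" "y \<in> ?S" for x y
    unfolding N_def quot_simps using coset_sum[OF flat_sub] that s(1) by blast
  have Nsm: "a \<odot>\<^bsub>N\<^esub> (?F +>\<^bsub>M\<^esub> x) = ?F +>\<^bsub>M\<^esub> (a \<odot>\<^bsub>M\<^esub> x)"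
    if "a \<in> carrier R" "x \<in> ?S" for a x
    unfolding N_def quot_simps using coset_smult[OF flat_sub] that s(1) by blast
  have step: "\<exists>x'. (x, x') \<in> D \<and> x' \<in> ?S" if "x \<in> ?S" for x using sharp_step that by blast
  show "mod_hom R N N ?T"
    unfolding mod_hom_def
  proof (intro conjI ballI)
    show "?T \<in> carrier N \<rightarrow> carrier N"
    proof
      fix U assume "U \<in> carrier N"
      then obtain x where x: "x \<in> ?S" "U = ?F +>\<^bsub>M\<^esub> x" using repN by blast
      obtain x' where "(x, x') \<in> D" "x' \<in> ?S" using step[OF x(1)] by blast
      then show "?T U \<in> carrier N" using T_rep x inN by simp
    qed
    fix U V assume "U \<in> carrier N" "V \<in> carrier N"
    then obtain x y where xy: "x \<in> ?S" "U = ?F +>\<^bsub>M\<^esub> x" "y \<in> ?S" "V = ?F +>\<^bsub>M\<^esub> y"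
      using repN by meson
    obtain x' where x': "(x, x') \<in> D" "x' \<in> ?S" using step[OF xy(1)] by blast
    obtain y' where y': "(y, y') \<in> D" "y' \<in> ?S" using step[OF xy(3)] by blast
    have "(x \<oplus>\<^bsub>M\<^esub> y, x' \<oplus>\<^bsub>M\<^esub> y') \<in> D" using x'(1) y'(1) by (rule D_add)
    then have "?T (?F +>\<^bsub>M\<^esub> (x \<oplus>\<^bsub>M\<^esub> y)) = ?F +>\<^bsub>M\<^esub> (x' \<oplus>\<^bsub>M\<^esub> y')"
      using T_rep s(5) xy x' y' by blast
    then show "?T (U \<oplus>\<^bsub>N\<^esub> V) = ?T U \<oplus>\<^bsub>N\<^esub> ?T V"
      using Nadd xy x' y' T_rep by simp
  next
    fix a U assume a: "a \<in> carrier R" and "U \<in> carrier N"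
    then obtain x where x: "x \<in> ?S" "U = ?F +>\<^bsub>M\<^esub> x" using repN by blast
    obtain x' where x': "(x, x') \<in> D" "x' \<in> ?S" using step[OF x(1)] by blast
    have "(a \<odot>\<^bsub>M\<^esub> x, a \<odot>\<^bsub>M\<^esub> x') \<in> D" using a x'(1) by (rule D_smult)
    then have "?T (?F +>\<^bsub>M\<^esub> (a \<odot>\<^bsub>M\<^esub> x)) = ?F +>\<^bsub>M\<^esub> (a \<odot>\<^bsub>M\<^esub> x')"
      using T_rep s(4) a x x' by blast
    then show "?T (a \<odot>\<^bsub>N\<^esub> U) = a \<odot>\<^bsub>N\<^esub> ?T U"
      using Nsm a x x' T_rep by simp
  qed
  show "?T ` carrier N = carrier N"
  proof
    show "?T ` carrier N \<subseteq> carrier N"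
    proof
      fix W assume "W \<in> ?T ` carrier N"
      then obtain U where U: "W = ?T U" "U \<in> carrier N" by (rule imageE)
      then obtain x where x: "x \<in> ?S" "U = ?F +>\<^bsub>M\<^esub> x" using repN by blast
      obtain x' where "(x, x') \<in> D" "x' \<in> ?S" using step[OF x(1)] by blast
      then show "W \<in> carrier N" using T_rep x inN U by simp
    qed
    show "carrier N \<subseteq> ?T ` carrier N"
    proof
      fix W assume "W \<in> carrier N"
      then obtain x' where x': "x' \<in> ?S" "W = ?F +>\<^bsub>M\<^esub> x'" using repN by blast
      obtain x where x: "(x, x') \<in> D" "x \<in> ?S" using sharp_back[OF x'(1)] by blast
      have "W = ?T (?F +>\<^bsub>M\<^esub> x)" using T_rep[OF x(2) x(1) x'(1)] x'(2) by simp
      moreover have "?F +>\<^bsub>M\<^esub> x \<in> carrier N" using inN x(2) by blast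
      ultimately show "W \<in> ?T ` carrier N" by (rule image_eqI)
    qed
  qed
  show "inj_on ?T (carrier N)"
  proof (rule inj_onI)
    fix U V assume "U \<in> carrier N" "V \<in> carrier N" and eq: "?T U = ?T V"
    then obtain x y where xy: "x \<in> ?S" "U = ?F +>\<^bsub>M\<^esub> x" "y \<in> ?S" "V = ?F +>\<^bsub>M\<^esub> y"
      using repN by meson
    obtain x' where x': "(x, x') \<in> D" "x' \<in> ?S" using step[OF xy(1)] by blast
    obtain y' where y': "(y, y') \<in> D" "y' \<in> ?S" using step[OF xy(3)] by blast
    have "?F +>\<^bsub>M\<^esub> x' = ?F +>\<^bsub>M\<^esub> y'" using eq xy T_rep x' y' by simp
    then have d': "x' \<ominus>\<^bsub>M\<^esub> y' \<in> ?F" using coset_eq[OF flat_sub] x'(2) y'(2) s(1) by blast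
    have "(x \<ominus>\<^bsub>M\<^esub> y, x' \<ominus>\<^bsub>M\<^esub> y') \<in> D" using x'(1) y'(1) by (rule D_diff)
    moreover have "x \<ominus>\<^bsub>M\<^esub> y \<in> ?S" using xy s(6) by blast
    ultimately have "x \<ominus>\<^bsub>M\<^esub> y \<in> ?F" using KL'[OF d'] by blast
    then show "U = V" using coset_eq[OF flat_sub] xy s(1) by blast
  qed
qed

end




theorem lemma4p12:
  fixes R :: "'r ring" and M :: "('r, 'm) module" and C :: "('m \<times> 'm) set" and I :: "'r set"
  assumes "module R M"
    and "lin_rel R M C"
    and "ideal I R"
    and "ideal_mod I M \<subseteq> rel_fin M (C\<inverse>) <+>\<^bsub>M\<^esub> rel_fin M C"
  shows "rel_sharp C \<inter> ideal_mod I M \<subseteq> rel_flat M C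
     \<and> (\<forall>a\<in>I. \<forall>x\<in>rel_sharp C. a \<odot>\<^bsub>M\<^esub> x \<in> rel_flat M C)
     \<and> (I = jacobson R \<and> perfect_wrt TYPE('m set) TYPE('p) R \<longrightarrow>
         (\<exists>(P :: ('r, 'p) module) t \<phi>.
            module R P \<and> projective R P \<and> mod_iso R P P t \<and>
            mod_iso R (quot P (carrier P) (ideal_mod I P)) (quot M (rel_sharp C) (rel_flat M C)) \<phi> \<and>
            (\<forall>U\<in>carrier (quot P (carrier P) (ideal_mod I P)).
               \<phi> (quot_map P (ideal_mod I P) t U) = sharp_T M C (\<phi> U))))"
proof -
  interpret L: lrel R M C using assms(1,2) by (simp add: lrel_def lrel_axioms_def)
  interpret MM: pmod R M unfolding pmod_def by (rule assms(1))
  have Ic: "I \<subseteq> carrier R"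
    using assms(3) by (simp add: ideal.axioms(1) additive_subgroup.a_subset)
  have p1: "rel_sharp C \<inter> ideal_mod I M \<subseteq> rel_flat M C"
    using L.part1 assms(4) by blast
  have p2: "\<forall>a\<in>I. \<forall>x\<in>rel_sharp C. a \<odot>\<^bsub>M\<^esub> x \<in> rel_flat M C"
  proof (intro ballI)
    fix a x assume a: "a \<in> I" and x: "x \<in> rel_sharp C"
    have ac: "a \<in> carrier R" using a Ic by blast
    have xc: "x \<in> carrier M" using x L.subE(1)[OF L.sharp_sub] by blast
    have "a \<odot>\<^bsub>M\<^esub> x \<in> ideal_mod I M" using MM.ideal_mod_gen[OF a Ic xc] .
    moreover have "a \<odot>\<^bsub>M\<^esub> x \<in> rel_sharp C" using L.subE(4)[OF L.sharp_sub ac x] .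
    ultimately show "a \<odot>\<^bsub>M\<^esub> x \<in> rel_flat M C" using p1 by blast
  qed
  have p3: "\<exists>(P :: ('r, 'p) module) t \<phi>.
            module R P \<and> projective R P \<and> mod_iso R P P t \<and>
            mod_iso R (quot P (carrier P) (ideal_mod I P)) (quot M (rel_sharp C) (rel_flat M C)) \<phi> \<and>
            (\<forall>U\<in>carrier (quot P (carrier P) (ideal_mod I P)).
               \<phi> (quot_map P (ideal_mod I P) t U) = sharp_T M C (\<phi> U))"
    if IJ: "I = jacobson R" and perf: "perfect_wrt TYPE('m set) TYPE('p) R"
  proof -
    define N where "N = quot M (rel_sharp C) (rel_flat M C)"
    note TP = L.T_props[folded N_def]
    obtain P :: "('r, 'p) module" and \<pi> where pc: "proj_cover R N P \<pi>"
      using perf TP(1) unfolding perfect_wrt_def by blast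
    have PP: "projective R P" using pc unfolding proj_cover_def by blast
    have MP: "module R P" using PP unfolding projective_def by blast
    note f = L.subE[OF L.flat_sub] and s = L.subE[OF L.sharp_sub]
    have ann: "\<forall>a\<in>jacobson R. \<forall>U\<in>carrier N. a \<odot>\<^bsub>N\<^esub> U = \<zero>\<^bsub>N\<^esub>"
    proof (intro ballI)
      fix a U assume a: "a \<in> jacobson R" and U: "U \<in> carrier N"
      have "U \<in> {rel_flat M C +>\<^bsub>M\<^esub> x | x. x \<in> rel_sharp C}" using U unfolding N_def quot_simps .
      then obtain x where x: "x \<in> rel_sharp C" "U = rel_flat M C +>\<^bsub>M\<^esub> x" by blast
      have aI: "a \<in> I" using a IJ by simp
      have ac: "a \<in> carrier R" using aI Ic by blast
      have xc: "x \<in> carrier M" using x s(1) by blast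
      have "a \<odot>\<^bsub>N\<^esub> U = rel_flat M C +>\<^bsub>M\<^esub> (a \<odot>\<^bsub>M\<^esub> x)"
        unfolding N_def quot_simps x(2) using L.coset_smult[OF L.flat_sub ac xc] .
      also have "\<dots> = rel_flat M C"
      proof -
        have "a \<odot>\<^bsub>M\<^esub> x \<in> rel_flat M C" using p2 aI x(1) by blast
        then show ?thesis by (rule abelian_subgroup.a_rcos_const[OF L.sub_abelian[OF L.flat_sub]])
      qed
      also have "\<dots> = \<zero>\<^bsub>N\<^esub>" unfolding N_def quot_simps ..
      finally show "a \<odot>\<^bsub>N\<^esub> U = \<zero>\<^bsub>N\<^esub>" .
    qed
    obtain t \<phi> where tphi: "mod_iso R P P t"
      "mod_iso R (quot P (carrier P) (ideal_mod (jacobson R) P)) N \<phi>"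
      "\<forall>U\<in>carrier (quot P (carrier P) (ideal_mod (jacobson R) P)).
         \<phi> (quot_map P (ideal_mod (jacobson R) P) t U) = sharp_T M C (\<phi> U)"
      using generic[OF TP(1) pc ann TP(2) TP(3) TP(4)] by blast
    show ?thesis using MP PP tphi unfolding N_def IJ[symmetric] by blast
  qed
  show ?thesis using p1 p2 p3 by blast
qed



end
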